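(* Let $\{\mathcal{T}^*_n\}_{n\ge K}$ be a $K$-type Community Modulated Preferential Attachment tree with parameters $p_i$, $q_{ij}$, $\alpha_{ij}$, and for $k\ge0$ let $N_k(n)$ be the number of vertices of out-degree $k$ in $\mathcal{T}^*_n$. Let $p_i^*=\sum_{j=1}^K p_jq_{ji}$, $$\nu_{ji}=\frac{p_jq_{ji}}{\alpha_{ji}p_i+p_i^*},\qquad \nu_i=\sum_{j=1}^K\nu_{ji},\qquad \alpha_i=\frac{\sum_{j=1}^K\nu_{ji}\alpha_{ji}}{\nu_i}.$$ Then for each fixed $k$, $N_k(n)/n\to c_k^*$ in probability as $n\to\infty$, where $$c_k^*=\sum_{i=1}^K\frac{p_i}{\nu_i}\,\frac{\Gamma(k+\alpha_i)\,\Gamma(1/\nu_i+\alpha_i)}{\Gamma(\alpha_i)\,\Gamma(k+1+1/\nu_i+\alpha_i)},$$ $\Gamma$ is the gamma function, and when $p_i^*=0$ the $i$-th term of $c_k^*$ is interpreted as $p_i$ if $k=0$ and $0$ otherwise.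
   Context: $K$-type Community Modulated Preferential Attachment (CMPA) tree: fix $K\ge 2$, a probability vector $(p_1,\dots,p_K)$ with $p_1=\max_i p_i>0$, numbers $q_{ij}\ge0$ with $\sum_j q_{ij}=1$ for each $i$, and positive numbers $\alpha_{ij}$. The initial tree $\mathcal{T}^*_K$ is a uniform random recursive tree on vertices $\{1,\dots,K\}$ whose vertices are assigned types $1,\dots,K$ via a uniform random permutation (one vertex of each type). For $n>K$, vertex $n$ is added to $\mathcal{T}^*_{n-1}$: (1) it is assigned type $i$ with probability $p_i$; (2) given type $i$, it chooses to connect to type $j$ with probability $q_{ij}$; (3) it connects to an existing type $j$ vertex $v$ with probability proportional to $D_v+\alpha_{ij}$ (normalized over all existing type $j$ vertices), where $D_v$ is the current out-degree (number of children) of $v$. All random choices are independent. *)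

theory Defs
  imports "HOL-Probability.Probability" "HOL-Analysis.Gamma_Function"
begin

text \<open>Conventions: types are 0..K-1 (paper type t+1 is type t here); vertices of the
tree with n vertices are 0..n-1 (paper vertex v+1 is vertex v here). A tree state is a
list whose v-th entry is (type of v, parent of v), the parent being None for the root.\<close>

type_synonym cmpa_state = "(nat \<times> nat option) list"

definition vtype :: "cmpa_state \<Rightarrow> nat \<Rightarrow> nat" where
  "vtype s v = fst (s ! v)"

definition outdeg :: "cmpa_state \<Rightarrow> nat \<Rightarrow> nat" where
  "outdeg s v = card {w. w < length s \<and> snd (s ! w) = Some v}"

fun urrt :: "nat \<Rightarrow> nat option list pmf" where
  "urrt 0 = return_pmf []"
| "urrt (Suc m) = do {
     ps \<leftarrow> urrt m;
     par \<leftarrow> (if m = 0 then return_pmf None else map_pmf Some (pmf_of_set {..<m}));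
     return_pmf (ps @ [par]) }"

definition cmpa_init :: "nat \<Rightarrow> cmpa_state pmf" where
  "cmpa_init K = do {
     \<sigma> \<leftarrow> pmf_of_set {\<sigma>. \<sigma> permutes {..<K}};
     ps \<leftarrow> urrt K;
     return_pmf (map (\<lambda>m. (\<sigma> m, ps ! m)) [0..<K]) }"

definition cmpa_target ::
  "(nat \<Rightarrow> nat \<Rightarrow> real) \<Rightarrow> cmpa_state \<Rightarrow> nat \<Rightarrow> nat \<Rightarrow> nat pmf" where
  "cmpa_target \<alpha> s i j =
     (let vs = filter (\<lambda>v. vtype s v = j) [0..<length s];
          W = (\<Sum>v\<leftarrow>vs. real (outdeg s v) + \<alpha> i j)
      in pmf_of_list (map (\<lambda>v. (v, (real (outdeg s v) + \<alpha> i j) / W)) vs))"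

definition cmpa_step ::
  "nat \<Rightarrow> (nat \<Rightarrow> real) \<Rightarrow> (nat \<Rightarrow> nat \<Rightarrow> real) \<Rightarrow> (nat \<Rightarrow> nat \<Rightarrow> real)
   \<Rightarrow> cmpa_state \<Rightarrow> cmpa_state pmf" where
  "cmpa_step K p q \<alpha> s = do {
     i \<leftarrow> pmf_of_list (map (\<lambda>t. (t, p t)) [0..<K]);
     j \<leftarrow> pmf_of_list (map (\<lambda>t. (t, q i t)) [0..<K]);
     v \<leftarrow> cmpa_target \<alpha> s i j;
     return_pmf (s @ [(i, Some v)]) }"

definition cmpa_tree ::
  "nat \<Rightarrow> (nat \<Rightarrow> real) \<Rightarrow> (nat \<Rightarrow> nat \<Rightarrow> real) \<Rightarrow> (nat \<Rightarrow> nat \<Rightarrow> real)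
   \<Rightarrow> nat \<Rightarrow> cmpa_state pmf" where
  "cmpa_tree K p q \<alpha> n = ((\<lambda>M. bind_pmf M (cmpa_step K p q \<alpha>)) ^^ (n - K)) (cmpa_init K)"

definition deg_count :: "nat \<Rightarrow> cmpa_state \<Rightarrow> nat" where
  "deg_count k s = card {v. v < length s \<and> outdeg s v = k}"

definition p_star :: "nat \<Rightarrow> (nat \<Rightarrow> real) \<Rightarrow> (nat \<Rightarrow> nat \<Rightarrow> real) \<Rightarrow> nat \<Rightarrow> real" where
  "p_star K p q i = (\<Sum>j<K. p j * q j i)"

definition nu2 :: "nat \<Rightarrow> (nat \<Rightarrow> real) \<Rightarrow> (nat \<Rightarrow> nat \<Rightarrow> real) \<Rightarrow> (nat \<Rightarrow> nat \<Rightarrow> real)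
   \<Rightarrow> nat \<Rightarrow> nat \<Rightarrow> real" where
  "nu2 K p q \<alpha> j i = p j * q j i / (\<alpha> j i * p i + p_star K p q i)"

definition nu1 :: "nat \<Rightarrow> (nat \<Rightarrow> real) \<Rightarrow> (nat \<Rightarrow> nat \<Rightarrow> real) \<Rightarrow> (nat \<Rightarrow> nat \<Rightarrow> real)
   \<Rightarrow> nat \<Rightarrow> real" where
  "nu1 K p q \<alpha> i = (\<Sum>j<K. nu2 K p q \<alpha> j i)"

definition alpha1 :: "nat \<Rightarrow> (nat \<Rightarrow> real) \<Rightarrow> (nat \<Rightarrow> nat \<Rightarrow> real) \<Rightarrow> (nat \<Rightarrow> nat \<Rightarrow> real)
   \<Rightarrow> nat \<Rightarrow> real" where
  "alpha1 K p q \<alpha> i = (\<Sum>j<K. nu2 K p q \<alpha> j i * \<alpha> j i) / nu1 K p q \<alpha> i"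

definition c_star :: "nat \<Rightarrow> (nat \<Rightarrow> real) \<Rightarrow> (nat \<Rightarrow> nat \<Rightarrow> real) \<Rightarrow> (nat \<Rightarrow> nat \<Rightarrow> real)
   \<Rightarrow> nat \<Rightarrow> real" where
  "c_star K p q \<alpha> k = (\<Sum>i<K.
     if p_star K p q i = 0 then (if k = 0 then p i else 0)
     else (let n = nu1 K p q \<alpha> i; a = alpha1 K p q \<alpha> i in
       p i / n * (Gamma (real k + a) * Gamma (1 / n + a))
         / (Gamma a * Gamma (real k + 1 + 1 / n + a))))"

end

theory Submission
  imports Defs
begin


lemma pol_wf:
  assumes "\<forall>x\<in>set xs. w x \<ge> 0" "sum_list (map w xs) = 1"
  shows "pmf_of_list_wf (map (\<lambda>x. (x, w x)) xs)"
  using assms by (intro pmf_of_list_wfI) (auto simp: o_def)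

lemma pol_set:
  assumes "\<forall>x\<in>set xs. w x \<ge> 0" "sum_list (map w xs) = 1"
  shows "set_pmf (pmf_of_list (map (\<lambda>x. (x, w x)) xs)) \<subseteq> set xs"
  using set_pmf_of_list[OF pol_wf[OF assms]] by auto

lemma pol_pmf:
  assumes "distinct xs" "\<forall>x\<in>set xs. w x \<ge> 0" "sum_list (map w xs) = 1"
  shows "pmf (pmf_of_list (map (\<lambda>x. (x, w x)) xs)) a = (if a \<in> set xs then w a else 0)"
proof -
  have "pmf (pmf_of_list (map (\<lambda>x. (x, w x)) xs)) a = sum_list (map w (filter (\<lambda>x. x = a) xs))"
    by (simp add: pmf_pmf_of_list[OF pol_wf[OF assms(2,3)]] filter_map o_def)
  also have "\<dots> = sum w (set (filter (\<lambda>x. x = a) xs))"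
    using assms(1) by (simp add: sum_list_distinct_conv_sum_set)
  also have "set (filter (\<lambda>x. x = a) xs) = (if a \<in> set xs then {a} else {})" by auto
  finally show ?thesis by simp
qed

lemma pol_bind_exp:
  fixes h :: "'b \<Rightarrow> real"
  assumes "distinct xs" "\<forall>x\<in>set xs. w x \<ge> 0" "sum_list (map w xs) = 1"
    and "\<And>x. x \<in> set xs \<Longrightarrow> finite (set_pmf (f x))"
  shows "measure_pmf.expectation (pmf_of_list (map (\<lambda>x. (x, w x)) xs) \<bind> f) h
         = (\<Sum>x\<in>set xs. w x * measure_pmf.expectation (f x) h)"
  apply (subst pmf_expectation_bind[of "set xs"])
  using assms pol_set[OF assms(2,3)] by (auto simp: pol_pmf intro!: sum.cong)

lemma pol_bind_finite:
  assumes "\<forall>x\<in>set xs. w x \<ge> 0" "sum_list (map w xs) = 1"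
    and "\<And>x. x \<in> set xs \<Longrightarrow> finite (set_pmf (f x))"
  shows "finite (set_pmf (pmf_of_list (map (\<lambda>x. (x, w x)) xs) \<bind> f))"
proof -
  have "finite (\<Union>x\<in>set_pmf (pmf_of_list (map (\<lambda>x. (x, w x)) xs)). set_pmf (f x))"
    using assms pol_set[OF assms(1,2)] by (intro finite_UN_I) (auto intro: finite_subset)
  then show ?thesis by simp
qed

lemma pol_bind_set:
  assumes "\<forall>x\<in>set xs. w x \<ge> 0" "sum_list (map w xs) = 1"
  shows "set_pmf (pmf_of_list (map (\<lambda>x. (x, w x)) xs) \<bind> f) \<subseteq> (\<Union>x\<in>set xs. set_pmf (f x))"
  using assms pol_set[OF assms(1,2)] by auto

lemma urrt_set: "ps \<in> set_pmf (urrt m) \<Longrightarrow> length ps = m \<and> (\<forall>w<m. \<forall>v. ps ! w = Some v \<longrightarrow> v < m)"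
proof (induction m arbitrary: ps)
  case 0 then show ?case by simp
next
  case (Suc m)
  from Suc.prems obtain ps0 par where ps0: "ps0 \<in> set_pmf (urrt m)"
    and par: "par \<in> set_pmf (if m = 0 then return_pmf None else map_pmf Some (pmf_of_set {..<m}))"
    and ps: "ps = ps0 @ [par]" by auto
  have "\<forall>v. par = Some v \<longrightarrow> v < m"
    using par by (cases "m = 0") (auto simp: set_pmf_of_set lessThan_empty_iff)
  with Suc.IH[OF ps0] ps show ?case
    by (auto simp: nth_append less_Suc_eq)
qed

definition Inv :: "nat \<Rightarrow> nat \<Rightarrow> cmpa_state \<Rightarrow> bool" where
  "Inv K n s \<longleftrightarrow> length s = n \<and> (\<forall>w<n. fst (s!w) < K) \<and> (\<forall>j<K. \<exists>w<n. fst (s!w) = j)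
     \<and> (\<forall>w<n. \<forall>v. snd (s!w) = Some v \<longrightarrow> v < n)"

definition Vs :: "nat \<Rightarrow> cmpa_state \<Rightarrow> nat set" where
  "Vs j s = {v\<in>{..<length s}. vtype s v = j}"

definition Ssum :: "real \<Rightarrow> cmpa_state \<Rightarrow> nat \<Rightarrow> real" where
  "Ssum a s j = (\<Sum>v\<in>Vs j s. real (outdeg s v) + a)"

definition wt :: "real \<Rightarrow> cmpa_state \<Rightarrow> nat \<Rightarrow> nat \<Rightarrow> real" where
  "wt a s j v = (real (outdeg s v) + a) / Ssum a s j"

lemma finite_Vs[simp]: "finite (Vs j s)" by (simp add: Vs_def)

lemma Inv_finite: "finite {s. Inv K n s}"
proof -
  have "{s. Inv K n s} \<subseteq> {xs. set xs \<subseteq> {..<K} \<times> insert None (Some ` {..<n}) \<and> length xs = n}"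
  proof
    fix s assume "s \<in> {s. Inv K n s}"
    then have I: "Inv K n s" by simp
    show "s \<in> {xs. set xs \<subseteq> {..<K} \<times> insert None (Some ` {..<n}) \<and> length xs = n}"
    proof (simp add: subset_iff, intro conjI allI impI)
      fix a b assume "(a, b) \<in> set s"
      then obtain w where w: "w < length s" "s ! w = (a, b)" by (auto simp: in_set_conv_nth)
      then show "a < K" using I by (force simp: Inv_def)
      show "b = None \<or> b \<in> Some ` {..<n}"
        using I w by (cases b) (force simp: Inv_def)+
    qed (use I in \<open>simp add: Inv_def\<close>)
  qed
  moreover have "finite {xs. set xs \<subseteq> {..<K} \<times> insert None (Some ` {..<n}) \<and> length xs = n}"
    by (intro finite_lists_length_eq) auto
  ultimately show ?thesis by (rule finite_subset)
qed

lemma init_Inv: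
  assumes "s \<in> set_pmf (cmpa_init K)"
  shows "Inv K K s"
proof -
  have fin: "finite {\<sigma>. \<sigma> permutes {..<K}}" by (rule finite_permutations) simp
  have ne: "{\<sigma>. \<sigma> permutes {..<K}} \<noteq> {}" using permutes_id by blast
  from assms obtain \<sigma> ps where sg: "\<sigma> permutes {..<K}" and ps: "ps \<in> set_pmf (urrt K)"
    and s: "s = map (\<lambda>m. (\<sigma> m, ps ! m)) [0..<K]"
    unfolding cmpa_init_def using fin ne by (auto simp: set_pmf_of_set)
  have u: "length ps = K" "\<forall>w<K. \<forall>v. ps ! w = Some v \<longrightarrow> v < K" using urrt_set[OF ps] by auto
  have "\<forall>j<K. \<exists>w<K. \<sigma> w = j"
  proof (intro allI impI)
    fix j assume "j < K"
    obtain w where "\<sigma> w = j" using permutes_surj[OF sg] by (metis surjD)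
    moreover have "w < K" using permutes_in_image[OF sg, of w] \<open>\<sigma> w = j\<close> \<open>j < K\<close> by simp
    ultimately show "\<exists>w<K. \<sigma> w = j" by blast
  qed
  moreover have "\<forall>w<K. \<sigma> w < K" using permutes_in_image[OF sg] by simp
  moreover have nthm: "\<And>w. w<K \<Longrightarrow> map (\<lambda>m. (\<sigma> m, ps ! m)) [0..<K] ! w = (\<sigma> w, ps!w)" by simp
  ultimately show ?thesis using u unfolding Inv_def s
    by (simp del: upt_Suc) (metis fst_conv nthm)
qed


lemma sum_list_upt_conv: "sum_list (map f [0..<n]) = (\<Sum>i<n. f i)"
  by (simp add: sum_list_distinct_conv_sum_set atLeast0LessThan)

lemma filter_upt_set: "set (filter P [0..<n]) = {v\<in>{..<n}. P v}" by auto

locale cmpa =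
  fixes K :: nat and p :: "nat \<Rightarrow> real" and q \<alpha> :: "nat \<Rightarrow> nat \<Rightarrow> real"
  assumes K1: "K \<ge> 1" and pnn: "\<forall>i<K. p i \<ge> 0" and psum: "(\<Sum>i<K. p i) = 1"
    and qnn: "\<forall>i<K. \<forall>j<K. q i j \<ge> 0" and qsum: "\<forall>i<K. (\<Sum>j<K. q i j) = 1"
    and apos: "\<forall>i<K. \<forall>j<K. \<alpha> i j > 0"
begin

abbreviation "step \<equiv> cmpa_step K p q \<alpha>"
abbreviation "M \<equiv> cmpa_tree K p q \<alpha>"

lemma Ssum_pos:
  assumes "Inv K n s" "i < K" "j < K"
  shows "Ssum (\<alpha> i j) s j > 0"
proof -
  obtain w where w: "w < n" "fst (s!w) = j" using assms unfolding Inv_def by blast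
  have wV: "w \<in> Vs j s" using w assms(1) by (auto simp: Vs_def Inv_def vtype_def)
  have ha: "\<alpha> i j > 0" using apos assms by auto
  have "0 < real (outdeg s w) + \<alpha> i j" using ha by (intro add_nonneg_pos) auto
  also have "\<dots> \<le> Ssum (\<alpha> i j) s j" unfolding Ssum_def
    by (intro member_le_sum) (use ha wV in auto)
  finally show ?thesis .
qed

lemma target_eq:
  "cmpa_target \<alpha> s i j = pmf_of_list (map (\<lambda>v. (v, wt (\<alpha> i j) s j v))
      (filter (\<lambda>v. vtype s v = j) [0..<length s]))"
proof -
  have "(\<Sum>v\<leftarrow>filter (\<lambda>v. vtype s v = j) [0..<length s]. real (outdeg s v) + \<alpha> i j)
        = Ssum (\<alpha> i j) s j"
    unfolding Ssum_def Vs_def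
    by (subst sum_list_distinct_conv_sum_set) (auto intro!: sum.cong)
  then show ?thesis unfolding cmpa_target_def wt_def Let_def by (simp add: o_def)
qed

lemma target_props:
  assumes "Inv K n s" "i < K" "j < K"
  shows "distinct (filter (\<lambda>v. vtype s v = j) [0..<length s])"
    "\<forall>v\<in>set (filter (\<lambda>v. vtype s v = j) [0..<length s]). wt (\<alpha> i j) s j v \<ge> 0"
    "sum_list (map (wt (\<alpha> i j) s j) (filter (\<lambda>v. vtype s v = j) [0..<length s])) = 1"
    "set (filter (\<lambda>v. vtype s v = j) [0..<length s]) = Vs j s"
proof -
  have S: "Ssum (\<alpha> i j) s j > 0" by (rule Ssum_pos[OF assms])
  show "distinct (filter (\<lambda>v. vtype s v = j) [0..<length s])" by simp
  show "\<forall>v\<in>set (filter (\<lambda>v. vtype s v = j) [0..<length s]). wt (\<alpha> i j) s j v \<ge> 0"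
  proof
    fix v
    have ha: "\<alpha> i j > 0" using apos assms by auto
    have "0 \<le> real (outdeg s v) + \<alpha> i j" using ha by simp
    then show "wt (\<alpha> i j) s j v \<ge> 0" unfolding wt_def using S by simp
  qed
  show sV: "set (filter (\<lambda>v. vtype s v = j) [0..<length s]) = Vs j s" by (auto simp: Vs_def)
  have "sum_list (map (wt (\<alpha> i j) s j) (filter (\<lambda>v. vtype s v = j) [0..<length s]))
       = (\<Sum>v\<in>Vs j s. wt (\<alpha> i j) s j v)"
    using sV by (subst sum_list_distinct_conv_sum_set) auto
  also have "\<dots> = Ssum (\<alpha> i j) s j / Ssum (\<alpha> i j) s j"
    unfolding wt_def Ssum_def by (simp add: sum_divide_distrib[symmetric])
  finally show "sum_list (map (wt (\<alpha> i j) s j) (filter (\<lambda>v. vtype s v = j) [0..<length s])) = 1"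
    using S by simp
qed

lemma p_props: "distinct [0..<K]" "\<forall>t\<in>set [0..<K]. p t \<ge> 0" "sum_list (map p [0..<K]) = 1"
  using pnn psum by (auto simp: sum_list_upt_conv)

lemma q_props: assumes "i < K"
  shows "\<forall>t\<in>set [0..<K]. q i t \<ge> 0" "sum_list (map (q i) [0..<K]) = 1"
  using qnn qsum assms by (auto simp: sum_list_upt_conv)

lemma step_eq: "step s = pmf_of_list (map (\<lambda>t. (t, p t)) [0..<K]) \<bind> (\<lambda>i.
     pmf_of_list (map (\<lambda>t. (t, q i t)) [0..<K]) \<bind> (\<lambda>j.
     pmf_of_list (map (\<lambda>v. (v, wt (\<alpha> i j) s j v)) (filter (\<lambda>v. vtype s v = j) [0..<length s])) \<bind>
     (\<lambda>v. return_pmf (s @ [(i, Some v)]))))"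
  unfolding cmpa_step_def target_eq by simp

lemma step_set:
  assumes "Inv K n s" "s' \<in> set_pmf (step s)"
  shows "\<exists>i<K. \<exists>v<n. s' = s @ [(i, Some v)]"
proof -
  from assms(2) obtain i where i: "i \<in> set_pmf (pmf_of_list (map (\<lambda>t. (t, p t)) [0..<K]))"
    and r1: "s' \<in> set_pmf (pmf_of_list (map (\<lambda>t. (t, q i t)) [0..<K]) \<bind> (\<lambda>j.
     pmf_of_list (map (\<lambda>v. (v, wt (\<alpha> i j) s j v)) (filter (\<lambda>v. vtype s v = j) [0..<length s])) \<bind>
     (\<lambda>v. return_pmf (s @ [(i, Some v)]))))"
    using assms(2) unfolding step_eq set_bind_pmf by blast
  have iK: "i < K" using pol_set[OF p_props(2,3)] i by auto
  from r1 obtain j where j: "j \<in> set_pmf (pmf_of_list (map (\<lambda>t. (t, q i t)) [0..<K]))"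
    and r2: "s' \<in> set_pmf (pmf_of_list (map (\<lambda>v. (v, wt (\<alpha> i j) s j v)) (filter (\<lambda>v. vtype s v = j) [0..<length s])) \<bind>
     (\<lambda>v. return_pmf (s @ [(i, Some v)])))" by auto
  have jK: "j < K" using pol_set[OF q_props[OF iK]] j by auto
  from r2 obtain v where v: "v \<in> set_pmf (pmf_of_list (map (\<lambda>v. (v, wt (\<alpha> i j) s j v)) (filter (\<lambda>v. vtype s v = j) [0..<length s])))"
    and s': "s' = s @ [(i, Some v)]" by auto
  have "v < length s" using pol_set[OF target_props(2,3)[OF assms(1) iK jK]] v by auto
  then show ?thesis using iK s' assms(1) by (auto simp: Inv_def)
qed

lemma step_Inv:
  assumes "Inv K n s" "s' \<in> set_pmf (step s)"
  shows "Inv K (Suc n) s'"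
proof -
  obtain i v where iv: "i < K" "v < n" "s' = s @ [(i, Some v)]" using step_set[OF assms] by blast
  have L: "length s = n" using assms(1) by (simp add: Inv_def)
  show ?thesis unfolding iv(3) Inv_def
  proof (intro conjI allI impI)
    show "length (s @ [(i, Some v)]) = Suc n" using L by simp
    fix w assume w: "w < Suc n"
    show "fst ((s @ [(i, Some v)]) ! w) < K"
      using assms(1) iv w by (auto simp: nth_append L Inv_def)
  next
    fix j assume j: "j < K"
    then obtain w where "w < n" "fst (s ! w) = j" using assms(1) by (auto simp: Inv_def)
    then show "\<exists>w<Suc n. fst ((s @ [(i, Some v)]) ! w) = j"
      by (intro exI[of _ w]) (auto simp: nth_append L)
  next
    fix w u assume w: "w < Suc n" and u: "snd ((s @ [(i, Some v)]) ! w) = Some u"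
    show "u < Suc n"
    proof (cases "w < n")
      case True
      then have "snd (s ! w) = Some u" using u by (simp add: nth_append L)
      then show ?thesis using assms(1) True by (auto simp: Inv_def)
    next
      case False
      then have "w = n" using w by simp
      then show ?thesis using u iv by (simp add: nth_append L)
    qed
  qed
qed

lemma step_finite:
  assumes "Inv K n s"
  shows "finite (set_pmf (step s))"
proof -
  have "set_pmf (step s) \<subseteq> {s'. Inv K (Suc n) s'}" using step_Inv[OF assms] by auto
  then show ?thesis using Inv_finite finite_subset by blast
qed

lemma step_exp:
  fixes f :: "cmpa_state \<Rightarrow> real"
  assumes "Inv K n s"
  shows "measure_pmf.expectation (step s) f =
    (\<Sum>i<K. p i * (\<Sum>j<K. q i j * (\<Sum>v\<in>Vs j s. wt (\<alpha> i j) s j v * f (s @ [(i, Some v)]))))"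
proof -
  have inner: "measure_pmf.expectation
     (pmf_of_list (map (\<lambda>v. (v, wt (\<alpha> i j) s j v)) (filter (\<lambda>v. vtype s v = j) [0..<length s])) \<bind>
     (\<lambda>v. return_pmf (s @ [(i, Some v)]))) f = (\<Sum>v\<in>Vs j s. wt (\<alpha> i j) s j v * f (s @ [(i, Some v)]))"
    and innerf: "finite (set_pmf (pmf_of_list (map (\<lambda>v. (v, wt (\<alpha> i j) s j v)) (filter (\<lambda>v. vtype s v = j) [0..<length s])) \<bind>
     (\<lambda>v. return_pmf (s @ [(i, Some v)]))))"
    if "i < K" "j < K" for i j
  proof -
    note tp = target_props[OF assms that]
    show "measure_pmf.expectation
     (pmf_of_list (map (\<lambda>v. (v, wt (\<alpha> i j) s j v)) (filter (\<lambda>v. vtype s v = j) [0..<length s])) \<bind>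
     (\<lambda>v. return_pmf (s @ [(i, Some v)]))) f = (\<Sum>v\<in>Vs j s. wt (\<alpha> i j) s j v * f (s @ [(i, Some v)]))"
      by (subst pol_bind_exp[OF tp(1,2,3)]) (auto simp: tp(4)[symmetric])
    show "finite (set_pmf (pmf_of_list (map (\<lambda>v. (v, wt (\<alpha> i j) s j v)) (filter (\<lambda>v. vtype s v = j) [0..<length s])) \<bind>
     (\<lambda>v. return_pmf (s @ [(i, Some v)]))))"
      by (rule pol_bind_finite[OF tp(2,3)]) auto
  qed
  have mid: "measure_pmf.expectation (pmf_of_list (map (\<lambda>t. (t, q i t)) [0..<K]) \<bind> (\<lambda>j.
     pmf_of_list (map (\<lambda>v. (v, wt (\<alpha> i j) s j v)) (filter (\<lambda>v. vtype s v = j) [0..<length s])) \<bind>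
     (\<lambda>v. return_pmf (s @ [(i, Some v)])))) f
     = (\<Sum>j<K. q i j * (\<Sum>v\<in>Vs j s. wt (\<alpha> i j) s j v * f (s @ [(i, Some v)])))"
    and midf: "finite (set_pmf (pmf_of_list (map (\<lambda>t. (t, q i t)) [0..<K]) \<bind> (\<lambda>j.
     pmf_of_list (map (\<lambda>v. (v, wt (\<alpha> i j) s j v)) (filter (\<lambda>v. vtype s v = j) [0..<length s])) \<bind>
     (\<lambda>v. return_pmf (s @ [(i, Some v)])))))"
    if "i < K" for i
  proof -
    show "measure_pmf.expectation (pmf_of_list (map (\<lambda>t. (t, q i t)) [0..<K]) \<bind> (\<lambda>j.
     pmf_of_list (map (\<lambda>v. (v, wt (\<alpha> i j) s j v)) (filter (\<lambda>v. vtype s v = j) [0..<length s])) \<bind>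
     (\<lambda>v. return_pmf (s @ [(i, Some v)])))) f
     = (\<Sum>j<K. q i j * (\<Sum>v\<in>Vs j s. wt (\<alpha> i j) s j v * f (s @ [(i, Some v)])))"
      apply (subst pol_bind_exp[OF _ q_props[OF that]])
        apply simp
       apply (rule innerf[OF that])
       apply simp
      apply (simp add: inner that atLeast0LessThan)
      done
    show "finite (set_pmf (pmf_of_list (map (\<lambda>t. (t, q i t)) [0..<K]) \<bind> (\<lambda>j.
     pmf_of_list (map (\<lambda>v. (v, wt (\<alpha> i j) s j v)) (filter (\<lambda>v. vtype s v = j) [0..<length s])) \<bind>
     (\<lambda>v. return_pmf (s @ [(i, Some v)])))))"
      apply (rule pol_bind_finite[OF q_props[OF that]])
      apply (rule innerf[OF that])
      apply simp
      done
  qed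
  show ?thesis unfolding step_eq
    apply (subst pol_bind_exp[OF p_props])
     apply (rule midf)
     apply simp
    apply (simp add: mid atLeast0LessThan)
    done
qed

lemma M_Suc: "n \<ge> K \<Longrightarrow> M (Suc n) = M n \<bind> step"
  unfolding cmpa_tree_def by (simp add: Suc_diff_le)

lemma M_Inv: "n \<ge> K \<Longrightarrow> s \<in> set_pmf (M n) \<Longrightarrow> Inv K n s"
proof (induction n arbitrary: s rule: dec_induct)
  case base
  then show ?case using init_Inv by (simp add: cmpa_tree_def)
next
  case (step m)
  then show ?case using M_Suc[OF step(1)] step_Inv by auto
qed

lemma M_finite: "n \<ge> K \<Longrightarrow> finite (set_pmf (M n))"
proof -
  assume "n \<ge> K"
  then have "set_pmf (M n) \<subseteq> {s. Inv K n s}" using M_Inv by blast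
  then show ?thesis using Inv_finite by (rule finite_subset)
qed

lemma M_exp_Suc:
  fixes h :: "cmpa_state \<Rightarrow> real"
  assumes "n \<ge> K"
  shows "measure_pmf.expectation (M (Suc n)) h
       = measure_pmf.expectation (M n) (\<lambda>s. measure_pmf.expectation (step s) h)"
proof -
  have sub: "set_pmf (M n) \<subseteq> {s. Inv K n s}" using M_Inv[OF assms] by auto
  have "measure_pmf.expectation (M (Suc n)) h = (\<Sum>a\<in>{s. Inv K n s}. pmf (M n) a *\<^sub>R measure_pmf.expectation (step a) h)"
    unfolding M_Suc[OF assms]
    by (rule pmf_expectation_bind) (use Inv_finite step_finite sub in auto)
  also have "\<dots> = measure_pmf.expectation (M n) (\<lambda>s. measure_pmf.expectation (step s) h)"
    by (subst integral_measure_pmf_real[of "{s. Inv K n s}"]) (use Inv_finite sub in \<open>auto simp: mult.commute\<close>)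
  finally show ?thesis .
qed

end


definition Tc :: "nat \<Rightarrow> cmpa_state \<Rightarrow> real" where
  "Tc t s = (\<Sum>w<length s. if vtype s w = t then 1 else 0)"
definition Ec :: "nat \<Rightarrow> cmpa_state \<Rightarrow> real" where
  "Ec t s = (\<Sum>w<length s. if vtype s w = t then real (outdeg s w) else 0)"
definition Nc :: "nat \<Rightarrow> nat \<Rightarrow> cmpa_state \<Rightarrow> real" where
  "Nc t k s = (\<Sum>w<length s. if vtype s w = t \<and> outdeg s w = k then 1 else 0)"

lemma sum_Vs: "(\<Sum>v\<in>Vs j s. g v) = (\<Sum>w<length s. if vtype s w = j then g w else 0)"
  unfolding Vs_def by (rule sum.inter_filter) simp

lemma Ssum_eq: "Ssum a s j = Ec j s + a * Tc j s"
  unfolding Ssum_def Ec_def Tc_def sum_Vs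
  by (subst sum_distrib_left) (auto simp: sum.distrib[symmetric] intro!: sum.cong)

lemma sum_change_one:
  assumes "finite A" "v \<in> A" "\<And>w. w \<in> A \<Longrightarrow> w \<noteq> v \<Longrightarrow> g' w = g w"
  shows "sum g' A = sum g A + (g' v - (g v :: real))"
proof -
  have "sum g' A = g' v + sum g' (A - {v})" using assms by (simp add: sum.remove)
  also have "sum g' (A - {v}) = sum g (A - {v})" using assms by (intro sum.cong) auto
  also have "sum g A = g v + sum g (A - {v})" using assms by (simp add: sum.remove)
  ultimately show ?thesis by simp
qed

context
  fixes K n :: nat and s :: cmpa_state and i v :: nat
  assumes I: "Inv K n s" and vn: "v < n"
begin

lemma len_s: "length s = n" using I by (simp add: Inv_def)

lemma vtype_app: "w < n \<Longrightarrow> vtype (s @ [(i, Some v)]) w = vtype s w"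
  "vtype (s @ [(i, Some v)]) n = i"
  by (auto simp: vtype_def nth_append len_s)

lemma outdeg_app1: "w < n \<Longrightarrow> outdeg (s @ [(i, Some v)]) w = outdeg s w + (if w = v then 1 else 0)"
proof -
  assume w: "w < n"
  have "{u. u < length (s @ [(i, Some v)]) \<and> snd ((s @ [(i, Some v)]) ! u) = Some w}
        = {u. u < length s \<and> snd (s ! u) = Some w} \<union> (if w = v then {n} else {})"
    by (auto simp: nth_append len_s less_Suc_eq)
  then show ?thesis unfolding outdeg_def using len_s by (auto simp: card_insert_if)
qed

lemma outdeg_app2: "outdeg (s @ [(i, Some v)]) n = 0"
proof -
  have "{u. u < length (s @ [(i, Some v)]) \<and> snd ((s @ [(i, Some v)]) ! u) = Some n} = {}"
    using I vn by (auto simp: nth_append len_s less_Suc_eq Inv_def)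
  then show ?thesis unfolding outdeg_def by simp
qed

lemma sum_app: "(\<Sum>w<length (s @ [(i, Some v)]). g w) = (\<Sum>w<n. g w) + g n"
  by (simp add: len_s)

lemma Tc_app: "Tc t (s @ [(i, Some v)]) = Tc t s + (if i = t then 1 else 0)"
proof -
  have "(\<Sum>w<n. if vtype (s @ [(i, Some v)]) w = t then 1 else 0) = (\<Sum>w<n. if vtype s w = t then 1 else (0::real))"
    by (intro sum.cong) (auto simp: vtype_app)
  then show ?thesis unfolding Tc_def sum_app len_s by (simp add: vtype_app)
qed

lemma Ec_app: "Ec t (s @ [(i, Some v)]) = Ec t s + (if vtype s v = t then 1 else 0)"
proof -
  have "(\<Sum>w<n. if vtype (s @ [(i, Some v)]) w = t then real (outdeg (s @ [(i, Some v)]) w) else 0)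
      = (\<Sum>w<n. if vtype s w = t then real (outdeg s w) + (if w = v then 1 else 0) else 0)"
    by (intro sum.cong) (auto simp: vtype_app outdeg_app1)
  also have "\<dots> = (\<Sum>w<n. if vtype s w = t then real (outdeg s w) else 0) + (if vtype s v = t then 1 else 0)"
    using sum_change_one[of "{..<n}" v "\<lambda>w. if vtype s w = t then real (outdeg s w) + (if w = v then 1 else 0) else 0"
       "\<lambda>w. if vtype s w = t then real (outdeg s w) else 0"] vn by auto
  finally have A: "(\<Sum>w<n. if vtype (s @ [(i, Some v)]) w = t then real (outdeg (s @ [(i, Some v)]) w) else 0)
     = (\<Sum>w<n. if vtype s w = t then real (outdeg s w) else 0) + (if vtype s v = t then 1 else 0)" .
  show ?thesis unfolding Ec_def sum_app len_s vtype_app(2) outdeg_app2 using A by simp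
qed

lemma Nc_app: "Nc t k (s @ [(i, Some v)]) = Nc t k s + (if i = t \<and> k = 0 then 1 else 0)
   + (if vtype s v = t then (if Suc (outdeg s v) = k then 1 else 0) - (if outdeg s v = k then 1 else 0) else 0)"
proof -
  have "(\<Sum>w<n. if vtype (s @ [(i, Some v)]) w = t \<and> outdeg (s @ [(i, Some v)]) w = k then 1 else 0)
      = (\<Sum>w<n. if vtype s w = t \<and> outdeg s w + (if w = v then 1 else 0) = k then 1 else (0::real))"
    by (intro sum.cong) (auto simp: vtype_app outdeg_app1)
  also have "\<dots> = (\<Sum>w<n. if vtype s w = t \<and> outdeg s w = k then 1 else 0)
      + (if vtype s v = t then (if Suc (outdeg s v) = k then 1 else 0) - (if outdeg s v = k then 1 else 0) else 0)"
    using sum_change_one[of "{..<n}" v "\<lambda>w. if vtype s w = t \<and> outdeg s w + (if w = v then 1 else 0) = k then 1 else (0::real)"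
       "\<lambda>w. if vtype s w = t \<and> outdeg s w = k then 1 else 0"] vn by auto
  finally have A: "(\<Sum>w<n. if vtype (s @ [(i, Some v)]) w = t \<and> outdeg (s @ [(i, Some v)]) w = k then 1 else (0::real))
    = (\<Sum>w<n. if vtype s w = t \<and> outdeg s w = k then 1 else 0)
      + (if vtype s v = t then (if Suc (outdeg s v) = k then 1 else 0) - (if outdeg s v = k then 1 else 0) else 0)" .
  show ?thesis unfolding Nc_def sum_app len_s vtype_app(2) outdeg_app2 using A by auto
qed

end

context cmpa
begin

lemma wt_sum:
  assumes "Inv K n s" "i < K" "j < K"
  shows "(\<Sum>v\<in>Vs j s. wt (\<alpha> i j) s j v) = 1"
proof -
  have "(\<Sum>v\<in>Vs j s. wt (\<alpha> i j) s j v) = Ssum (\<alpha> i j) s j / Ssum (\<alpha> i j) s j"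
    unfolding wt_def Ssum_def by (simp add: sum_divide_distrib[symmetric])
  then show ?thesis using Ssum_pos[OF assms] by simp
qed

lemma Vs_lt: "v \<in> Vs j s \<Longrightarrow> v < length s" "v \<in> Vs j s \<Longrightarrow> vtype s v = j"
  by (auto simp: Vs_def)

lemma step_exp_decomp:
  fixes f :: "cmpa_state \<Rightarrow> real"
  assumes I: "Inv K n s" and t: "t < K"
    and f: "\<And>i v. i < K \<Longrightarrow> v < n \<Longrightarrow>
       f (s @ [(i, Some v)]) = f s + a i + (if vtype s v = t then h i (outdeg s v) else 0)"
  shows "measure_pmf.expectation (step s) f = f s + (\<Sum>i<K. p i * a i)
     + (\<Sum>i<K. p i * q i t * (\<Sum>v\<in>Vs t s. wt (\<alpha> i t) s t v * h i (outdeg s v)))"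
proof -
  have L: "length s = n" using I by (simp add: Inv_def)
  have inner: "(\<Sum>v\<in>Vs j s. wt (\<alpha> i j) s j v * f (s @ [(i, Some v)]))
     = f s + a i + (if j = t then (\<Sum>v\<in>Vs t s. wt (\<alpha> i t) s t v * h i (outdeg s v)) else 0)"
    if ij: "i < K" "j < K" for i j
  proof -
    have "(\<Sum>v\<in>Vs j s. wt (\<alpha> i j) s j v * f (s @ [(i, Some v)]))
      = (\<Sum>v\<in>Vs j s. wt (\<alpha> i j) s j v * (f s + a i) + (if j = t then wt (\<alpha> i j) s j v * h i (outdeg s v) else 0))"
      using Vs_lt[of _ j s] L by (intro sum.cong refl) (auto simp: f ij algebra_simps)
    also have "\<dots> = (\<Sum>v\<in>Vs j s. wt (\<alpha> i j) s j v) * (f s + a i) + (if j = t then (\<Sum>v\<in>Vs t s. wt (\<alpha> i t) s t v * h i (outdeg s v)) else 0)"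
      by (simp add: sum.distrib sum_distrib_right)
    finally show ?thesis using wt_sum[OF I ij] by simp
  qed
  have mid: "(\<Sum>j<K. q i j * (\<Sum>v\<in>Vs j s. wt (\<alpha> i j) s j v * f (s @ [(i, Some v)])))
     = f s + a i + q i t * (\<Sum>v\<in>Vs t s. wt (\<alpha> i t) s t v * h i (outdeg s v))" if i: "i < K" for i
  proof -
    have "(\<Sum>j<K. q i j * (\<Sum>v\<in>Vs j s. wt (\<alpha> i j) s j v * f (s @ [(i, Some v)])))
      = (\<Sum>j<K. q i j * (f s + a i) + (if j = t then q i t * (\<Sum>v\<in>Vs t s. wt (\<alpha> i t) s t v * h i (outdeg s v)) else 0))"
      by (intro sum.cong refl) (auto simp: inner i algebra_simps)
    also have "\<dots> = (\<Sum>j<K. q i j) * (f s + a i) + q i t * (\<Sum>v\<in>Vs t s. wt (\<alpha> i t) s t v * h i (outdeg s v))"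
      using t by (simp add: sum.distrib sum_distrib_right)
    finally show ?thesis using qsum i by simp
  qed
  have "measure_pmf.expectation (step s) f = (\<Sum>i<K. p i * (f s + a i + q i t * (\<Sum>v\<in>Vs t s. wt (\<alpha> i t) s t v * h i (outdeg s v))))"
    by (subst step_exp[OF I]) (auto intro!: sum.cong simp: mid)
  also have "\<dots> = (\<Sum>i<K. p i) * f s + (\<Sum>i<K. p i * a i)
     + (\<Sum>i<K. p i * q i t * (\<Sum>v\<in>Vs t s. wt (\<alpha> i t) s t v * h i (outdeg s v)))"
    by (simp add: sum.distrib distrib_left sum_distrib_right mult.assoc)
  finally show ?thesis using psum by simp
qed

end


context cmpa
begin

definition pst :: "nat \<Rightarrow> real" where "pst t = (\<Sum>i<K. p i * q i t)"
definition sig :: "nat \<Rightarrow> nat \<Rightarrow> real" where "sig i t = \<alpha> i t * p t + pst t"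
definition nu :: "nat \<Rightarrow> nat \<Rightarrow> real" where "nu i t = p i * q i t / sig i t"
definition bb :: "nat \<Rightarrow> nat \<Rightarrow> real" where "bb t k = (\<Sum>i<K. nu i t * (real k + \<alpha> i t))"
primrec cc :: "nat \<Rightarrow> nat \<Rightarrow> real" where
  "cc t 0 = p t / (1 + bb t 0)"
| "cc t (Suc k) = bb t k * cc t k / (1 + bb t (Suc k))"

lemma pq_nn: "i < K \<Longrightarrow> t < K \<Longrightarrow> p i * q i t \<ge> 0"
  using pnn qnn by auto

lemma pst_nn: "t < K \<Longrightarrow> pst t \<ge> 0"
  unfolding pst_def using pq_nn by (auto intro: sum_nonneg)

lemma pq_le_pst: "i < K \<Longrightarrow> t < K \<Longrightarrow> p i * q i t \<le> pst t"
  unfolding pst_def using pq_nn by (intro member_le_sum) auto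

lemma sig_nn: "i < K \<Longrightarrow> t < K \<Longrightarrow> sig i t \<ge> 0"
proof -
  assume a: "i < K" "t < K"
  have "\<alpha> i t > 0" "p t \<ge> 0" using apos pnn a by auto
  then show ?thesis unfolding sig_def using pst_nn[OF a(2)] by simp
qed

lemma pq_le_sig: "i < K \<Longrightarrow> t < K \<Longrightarrow> p i * q i t \<le> sig i t"
  unfolding sig_def using pq_le_pst[of i t] apos pnn
  by (smt (verit, best) mult_nonneg_nonneg)

lemma nu_nn: "i < K \<Longrightarrow> t < K \<Longrightarrow> nu i t \<ge> 0"
  unfolding nu_def using pq_nn sig_nn by auto

lemma nu_sig: "i < K \<Longrightarrow> t < K \<Longrightarrow> nu i t * sig i t = p i * q i t"
proof -
  assume a: "i < K" "t < K"
  show ?thesis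
  proof (cases "sig i t = 0")
    case True
    then show ?thesis using pq_le_sig[OF a] pq_nn[OF a] by (simp add: nu_def)
  qed (simp add: nu_def)
qed

lemma bb_nn: "t < K \<Longrightarrow> bb t k \<ge> 0"
  unfolding bb_def
proof (intro sum_nonneg mult_nonneg_nonneg)
  fix i assume "t < K" "i \<in> {..<K}"
  then show "0 \<le> nu i t" "0 \<le> real k + \<alpha> i t" using nu_nn apos by (auto simp: less_imp_le add_nonneg_nonneg)
qed

lemma cc_nn: "t < K \<Longrightarrow> cc t k \<ge> 0"
  by (induction k) (use bb_nn pnn in auto)

lemma wt_ind:
  "(\<Sum>v\<in>Vs t s. wt a s t v * (if outdeg s v = d then 1 else 0)) = (real d + a) * Nc t d s / Ssum a s t"
proof -
  have "(\<Sum>v\<in>Vs t s. wt a s t v * (if outdeg s v = d then 1 else 0))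
      = (\<Sum>w<length s. (real d + a) / Ssum a s t * (if vtype s w = t \<and> outdeg s w = d then 1 else 0))"
    unfolding sum_Vs wt_def by (intro sum.cong) auto
  then show ?thesis unfolding Nc_def by (subst (asm) sum_distrib_left[symmetric]) simp
qed

lemma drift_T:
  assumes I: "Inv K n s" and t: "t < K"
  shows "measure_pmf.expectation (step s) (Tc t) = Tc t s + p t"
proof -
  have "measure_pmf.expectation (step s) (Tc t) = Tc t s + (\<Sum>i<K. p i * (if i = t then 1 else 0))
     + (\<Sum>i<K. p i * q i t * (\<Sum>v\<in>Vs t s. wt (\<alpha> i t) s t v * 0))"
    by (rule step_exp_decomp[OF I t]) (simp add: Tc_app[OF I])
  then show ?thesis using t by (simp add: if_distrib cong: if_cong)
qed

lemma drift_E: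
  assumes I: "Inv K n s" and t: "t < K"
  shows "measure_pmf.expectation (step s) (Ec t) = Ec t s + pst t"
proof -
  have "measure_pmf.expectation (step s) (Ec t) = Ec t s + (\<Sum>i<K. p i * 0)
     + (\<Sum>i<K. p i * q i t * (\<Sum>v\<in>Vs t s. wt (\<alpha> i t) s t v * 1))"
    by (rule step_exp_decomp[OF I t]) (simp add: Ec_app[OF I])
  also have "\<dots> = Ec t s + pst t"
    unfolding pst_def using wt_sum[OF I _ t] by simp
  finally show ?thesis .
qed

definition inN :: "nat \<Rightarrow> nat \<Rightarrow> nat \<Rightarrow> cmpa_state \<Rightarrow> real" where
  "inN i t k s = (if k = 0 then 0 else (real (k - 1) + \<alpha> i t) * Nc t (k - 1) s)"
definition outN :: "nat \<Rightarrow> nat \<Rightarrow> nat \<Rightarrow> cmpa_state \<Rightarrow> real" where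
  "outN i t k s = (real k + \<alpha> i t) * Nc t k s"

lemma drift_N:
  assumes I: "Inv K n s" and t: "t < K"
  shows "measure_pmf.expectation (step s) (Nc t k) = Nc t k s + (if k = 0 then p t else 0)
     + (\<Sum>i<K. p i * q i t * ((inN i t k s - outN i t k s) / Ssum (\<alpha> i t) s t))"
proof -
  have "measure_pmf.expectation (step s) (Nc t k) = Nc t k s + (\<Sum>i<K. p i * (if i = t \<and> k = 0 then 1 else 0))
     + (\<Sum>i<K. p i * q i t * (\<Sum>v\<in>Vs t s. wt (\<alpha> i t) s t v *
         ((if Suc (outdeg s v) = k then 1 else 0) - (if outdeg s v = k then 1 else 0))))"
    by (rule step_exp_decomp[OF I t]) (simp add: Nc_app[OF I])
  moreover have "(\<Sum>i<K. p i * (if i = t \<and> k = 0 then 1 else 0)) = (if k = 0 then p t else 0)"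
    using t by (simp add: if_distrib cong: if_cong)
  moreover have inner: "(\<Sum>v\<in>Vs t s. wt (\<alpha> i t) s t v *
         ((if Suc (outdeg s v) = k then 1 else 0) - (if outdeg s v = k then 1 else 0)))
       = (inN i t k s - outN i t k s) / Ssum (\<alpha> i t) s t" for i
  proof -
    have "(\<Sum>v\<in>Vs t s. wt (\<alpha> i t) s t v *
         ((if Suc (outdeg s v) = k then 1 else 0) - (if outdeg s v = k then 1 else 0)))
      = (\<Sum>v\<in>Vs t s. wt (\<alpha> i t) s t v * (if k = 0 then 0 else (if outdeg s v = k - 1 then 1 else 0)))
        - (\<Sum>v\<in>Vs t s. wt (\<alpha> i t) s t v * (if outdeg s v = k then 1 else 0))"
      by (simp add: sum_subtractf[symmetric] right_diff_distrib) (intro sum.cong; auto)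
    also have "\<dots> = (inN i t k s - outN i t k s) / Ssum (\<alpha> i t) s t"
      by (cases "k = 0") (simp_all add: wt_ind inN_def outN_def diff_divide_distrib)
    finally show ?thesis .
  qed
  ultimately show ?thesis by (simp add: inner)
qed

lemma step_app:
  assumes "Inv K n s" "s' \<in> set_pmf (step s)"
  obtains i v where "i < K" "v < n" "s' = s @ [(i, Some v)]"
  using step_set[OF assms] by blast

end


definition small :: "(nat \<Rightarrow> real) \<Rightarrow> bool" where
  "small f \<longleftrightarrow> (\<forall>e>0. eventually (\<lambda>n. f n \<le> e * real n) sequentially)"

lemma small_const: "small (\<lambda>_. c)"
  unfolding small_def
proof (intro allI impI)
  fix e :: real assume e: "e > 0"
  obtain N :: nat where N: "real N \<ge> c / e" using real_arch_simple by blast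
  show "eventually (\<lambda>n. c \<le> e * real n) sequentially"
  proof (rule eventually_sequentiallyI[of N])
    fix n assume "N \<le> n"
    then have "c / e \<le> real n" using N by linarith
    then show "c \<le> e * real n" using e by (simp add: field_simps)
  qed
qed

lemma small_add: "small f \<Longrightarrow> small g \<Longrightarrow> small (\<lambda>n. f n + g n)"
  unfolding small_def
proof (intro allI impI)
  fix e :: real assume "\<forall>e>0. eventually (\<lambda>n. f n \<le> e * real n) sequentially"
    "\<forall>e>0. eventually (\<lambda>n. g n \<le> e * real n) sequentially" "e > 0"
  then have "eventually (\<lambda>n. f n \<le> e/2 * real n) sequentially" "eventually (\<lambda>n. g n \<le> e/2 * real n) sequentially"
    by (meson half_gt_zero)+
  then show "eventually (\<lambda>n. f n + g n \<le> e * real n) sequentially"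
    by eventually_elim (simp add: field_simps)
qed

lemma small_cmult: "small f \<Longrightarrow> c \<ge> 0 \<Longrightarrow> small (\<lambda>n. c * f n)"
  unfolding small_def
proof (intro allI impI)
  fix e :: real assume A: "\<forall>e>0. eventually (\<lambda>n. f n \<le> e * real n) sequentially" "c \<ge> 0" "e > 0"
  show "eventually (\<lambda>n. c * f n \<le> e * real n) sequentially"
  proof (cases "c = 0")
    case True
    then show ?thesis using A by (auto intro: always_eventually)
  next
    case False
    then have "c > 0" using A by simp
    then have "eventually (\<lambda>n. f n \<le> (e / c) * real n) sequentially" using A by (meson divide_pos_pos)
    then show ?thesis
    proof eventually_elim
      case (elim n)
      then have "c * f n \<le> c * ((e / c) * real n)" using \<open>c > 0\<close> by (intro mult_left_mono) auto
      then show ?case using \<open>c > 0\<close> by simp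
    qed
  qed
qed

lemma small_mono: "small g \<Longrightarrow> eventually (\<lambda>n. f n \<le> g n) sequentially \<Longrightarrow> small f"
  unfolding small_def
proof (intro allI impI)
  fix e :: real assume "\<forall>e>0. eventually (\<lambda>n. g n \<le> e * real n) sequentially" "e > 0"
    "eventually (\<lambda>n. f n \<le> g n) sequentially"
  then have "eventually (\<lambda>n. g n \<le> e * real n) sequentially" "eventually (\<lambda>n. f n \<le> g n) sequentially" by auto
  then show "eventually (\<lambda>n. f n \<le> e * real n) sequentially" by eventually_elim simp
qed

lemma small_sum: "finite A \<Longrightarrow> (\<And>i. i \<in> A \<Longrightarrow> small (f i)) \<Longrightarrow> small (\<lambda>n. \<Sum>i\<in>A. f i n)"
  by (induction A rule: finite_induct) (auto intro: small_add small_const)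

lemma growth:
  fixes z r :: "nat \<Rightarrow> real"
  assumes step: "\<And>n. n \<ge> N0 \<Longrightarrow> z (Suc n) \<le> z n + r n" and r: "small r"
  shows "\<forall>e>0. eventually (\<lambda>n. z n \<le> e * (real n)^2) sequentially"
proof (intro allI impI)
  fix e :: real assume e: "e > 0"
  obtain N1 where N1: "\<And>n. n \<ge> N1 \<Longrightarrow> r n \<le> e/2 * real n"
    using r e unfolding small_def eventually_sequentially by (metis half_gt_zero)
  define N where "N = max N0 N1"
  have bound: "z n \<le> z N + e/2 * ((real n)^2 - (real N)^2)" if "n \<ge> N" for n
    using that
  proof (induction n rule: dec_induct)
    case base then show ?case by simp
  next
    case (step m)
    have "z (Suc m) \<le> z m + r m" using step.hyps by (intro assms(1)) (simp add: N_def)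
    also have "r m \<le> e/2 * real m" using step.hyps by (intro N1) (simp add: N_def)
    finally have "z (Suc m) \<le> z N + e/2 * ((real m)^2 - (real N)^2) + e/2 * real m"
      using step.IH by linarith
    also have "\<dots> \<le> z N + e/2 * ((real (Suc m))^2 - (real N)^2)"
      using e by (simp add: power2_eq_square field_simps)
    finally show ?case .
  qed
  have ev: "eventually (\<lambda>n. z N \<le> e/2 * real n) sequentially"
    using small_const[of "z N"] e unfolding small_def by (metis half_gt_zero)
  show "eventually (\<lambda>n. z n \<le> e * (real n)^2) sequentially"
    using ev eventually_ge_at_top[of N]
  proof eventually_elim
    case (elim n)
    have "real n \<le> (real n)^2" by (cases n) (auto simp: power2_eq_square)
    then have "e/2 * real n \<le> e/2 * (real n)^2" using e by (intro mult_left_mono) auto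
    moreover have "0 \<le> e/2 * (real N)^2" using e by simp
    moreover have "z n \<le> z N + e/2 * (real n)^2 - e/2 * (real N)^2"
      using bound[OF elim(2)] by (simp add: right_diff_distrib)
    ultimately show ?case using elim(1) by linarith
  qed
qed

lemma exp_mono_fin:
  fixes f g :: "'a \<Rightarrow> real"
  assumes "finite (set_pmf N)" "\<And>x. x \<in> set_pmf N \<Longrightarrow> f x \<le> g x"
  shows "measure_pmf.expectation N f \<le> measure_pmf.expectation N g"
  using assms by (intro integral_mono_AE integrable_measure_pmf_finite AE_pmfI) auto

lemma fexp_const: "measure_pmf.expectation N (\<lambda>x. c) = (c::real)"
  by (simp add: measure_pmf.prob_space)

lemma fexp_add: "finite (set_pmf N) \<Longrightarrow> measure_pmf.expectation N (\<lambda>x. f x + g x) =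
   measure_pmf.expectation N f + measure_pmf.expectation N (g :: _ \<Rightarrow> real)"
  by (rule Bochner_Integration.integral_add) (auto intro: integrable_measure_pmf_finite)

lemma fexp_diff: "finite (set_pmf N) \<Longrightarrow> measure_pmf.expectation N (\<lambda>x. f x - g x) =
   measure_pmf.expectation N f - measure_pmf.expectation N (g :: _ \<Rightarrow> real)"
  by (rule Bochner_Integration.integral_diff) (auto intro: integrable_measure_pmf_finite)

lemma fexp_cmult: "measure_pmf.expectation N (\<lambda>x. c * f x) = c * measure_pmf.expectation N (f :: _ \<Rightarrow> real)"
  by simp

lemma fexp_sum: "finite (set_pmf N) \<Longrightarrow> finite A \<Longrightarrow> measure_pmf.expectation N (\<lambda>x. \<Sum>i\<in>A. f i x) =
   (\<Sum>i\<in>A. measure_pmf.expectation N (f i :: _ \<Rightarrow> real))"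
  by (rule Bochner_Integration.integral_sum) (auto intro: integrable_measure_pmf_finite)

lemma abs_le_sq: "c > 0 \<Longrightarrow> \<bar>y::real\<bar> \<le> (y^2 / c + c) / 2"
proof -
  assume c: "c > 0"
  have "0 \<le> (\<bar>y\<bar> - c)^2" by simp
  then have "2 * c * \<bar>y\<bar> \<le> y^2 + c^2" by (simp add: power2_eq_square algebra_simps)
  then show ?thesis using c by (simp add: field_simps power2_eq_square)
qed

lemma exp_abs_le:
  fixes y :: "'a \<Rightarrow> real"
  assumes fin: "finite (set_pmf N)" and c: "c > 0"
  shows "measure_pmf.expectation N (\<lambda>x. \<bar>y x\<bar>) \<le> (measure_pmf.expectation N (\<lambda>x. (y x)^2) / c + c) / 2"
proof -
  have "measure_pmf.expectation N (\<lambda>x. \<bar>y x\<bar>) \<le> measure_pmf.expectation N (\<lambda>x. ((y x)^2 / c + c) / 2)"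
    by (rule exp_mono_fin[OF fin abs_le_sq[OF c]])
  also have "\<dots> = (measure_pmf.expectation N (\<lambda>x. (y x)^2) / c + c) / 2"
    using fin by (simp add: fexp_add fexp_const integral_divide_zero)
  finally show ?thesis .
qed

context cmpa
begin

lemma L2_step:
  fixes y :: "cmpa_state \<Rightarrow> real"
  assumes n: "n \<ge> K" and B: "\<And>s s'. Inv K n s \<Longrightarrow> s' \<in> set_pmf (step s) \<Longrightarrow> \<bar>y s' - y s\<bar> \<le> B"
  shows "measure_pmf.expectation (M (Suc n)) (\<lambda>s. (y s)^2)
     \<le> measure_pmf.expectation (M n) (\<lambda>s. (y s)^2 + 2 * y s * (measure_pmf.expectation (step s) y - y s)) + B^2"
proof -
  have pw: "measure_pmf.expectation (step s) (\<lambda>s'. (y s')^2)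
      \<le> ((y s)^2 + 2 * y s * (measure_pmf.expectation (step s) y - y s)) + B^2" if I: "Inv K n s" for s
  proof -
    have fin: "finite (set_pmf (step s))" by (rule step_finite[OF I])
    have "measure_pmf.expectation (step s) (\<lambda>s'. (y s')^2)
       \<le> measure_pmf.expectation (step s) (\<lambda>s'. ((y s)^2 + (2 * y s) * (y s' - y s)) + B^2)"
    proof (rule exp_mono_fin[OF fin])
      fix s' assume s': "s' \<in> set_pmf (step s)"
      have "\<bar>y s' - y s\<bar> \<le> \<bar>B\<bar>" using B[OF I s'] by linarith
      then have "(y s' - y s)^2 \<le> B^2" by (simp add: abs_le_square_iff)
      moreover have "(y s')^2 = (y s)^2 + 2 * y s * (y s' - y s) + (y s' - y s)^2"
        by (simp add: power2_eq_square algebra_simps)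
      ultimately show "(y s')^2 \<le> ((y s)^2 + (2 * y s) * (y s' - y s)) + B^2" by linarith
    qed
    also have "\<dots> = ((y s)^2 + 2 * y s * (measure_pmf.expectation (step s) y - y s)) + B^2"
      by (simp only: fexp_add[OF fin] fexp_const fexp_cmult fexp_diff[OF fin])
    finally show ?thesis .
  qed
  have finM: "finite (set_pmf (M n))" by (rule M_finite[OF n])
  have "measure_pmf.expectation (M (Suc n)) (\<lambda>s. (y s)^2)
      = measure_pmf.expectation (M n) (\<lambda>s. measure_pmf.expectation (step s) (\<lambda>s'. (y s')^2))"
    by (rule M_exp_Suc[OF n])
  also have "\<dots> \<le> measure_pmf.expectation (M n) (\<lambda>s. ((y s)^2 + 2 * y s * (measure_pmf.expectation (step s) y - y s)) + B^2)"
    by (rule exp_mono_fin[OF finM]) (use pw M_Inv[OF n] in auto)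
  also have "\<dots> = measure_pmf.expectation (M n) (\<lambda>s. (y s)^2 + 2 * y s * (measure_pmf.expectation (step s) y - y s)) + B^2"
    by (simp only: fexp_add[OF finM] fexp_const)
  finally show ?thesis .
qed

lemma track:
  fixes y :: "cmpa_state \<Rightarrow> real" and g :: "nat \<Rightarrow> cmpa_state \<Rightarrow> real"
  assumes B: "\<And>n s s'. n \<ge> K \<Longrightarrow> Inv K n s \<Longrightarrow> s' \<in> set_pmf (step s) \<Longrightarrow> \<bar>y s' - y s\<bar> \<le> B"
    and D: "\<And>n s. n \<ge> K \<Longrightarrow> Inv K n s \<Longrightarrow> y s * (measure_pmf.expectation (step s) y - y s) \<le> g n s"
    and r: "small (\<lambda>n. measure_pmf.expectation (M n) (g n))"
  shows "small (\<lambda>n. measure_pmf.expectation (M n) (\<lambda>s. \<bar>y s\<bar>))"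
proof -
  define z where "z n = measure_pmf.expectation (M n) (\<lambda>s. (y s)^2)" for n
  have zs: "z (Suc n) \<le> z n + (2 * measure_pmf.expectation (M n) (g n) + B^2)" if n: "n \<ge> K" for n
  proof -
    have finM: "finite (set_pmf (M n))" by (rule M_finite[OF n])
    have "z (Suc n) \<le> measure_pmf.expectation (M n) (\<lambda>s. (y s)^2 + 2 * (y s * (measure_pmf.expectation (step s) y - y s))) + B^2"
      unfolding z_def using L2_step[OF n B[OF n]] by (simp add: mult.assoc)
    also have "measure_pmf.expectation (M n) (\<lambda>s. (y s)^2 + 2 * (y s * (measure_pmf.expectation (step s) y - y s)))
       \<le> measure_pmf.expectation (M n) (\<lambda>s. (y s)^2 + 2 * g n s)"
      by (rule exp_mono_fin[OF finM]) (use D[OF n] M_Inv[OF n] in force)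
    also have "\<dots> = z n + 2 * measure_pmf.expectation (M n) (g n)"
      unfolding z_def by (simp only: fexp_add[OF finM] fexp_cmult)
    finally show ?thesis by simp
  qed
  have sr: "small (\<lambda>n. 2 * measure_pmf.expectation (M n) (g n) + B^2)"
    by (intro small_add small_cmult r small_const) simp
  have zg: "\<forall>e>0. eventually (\<lambda>n. z n \<le> e * (real n)^2) sequentially"
    by (rule growth[OF zs sr])
  show ?thesis unfolding small_def
  proof (intro allI impI)
    fix e :: real assume e: "e > 0"
    have "eventually (\<lambda>n. z n \<le> (e^2) * (real n)^2) sequentially" using zg e by simp
    then show "eventually (\<lambda>n. measure_pmf.expectation (M n) (\<lambda>s. \<bar>y s\<bar>) \<le> e * real n) sequentially"
      using eventually_ge_at_top[of "max K 1"]
    proof eventually_elim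
      case (elim n)
      then have n: "n \<ge> K" "n \<ge> 1" by auto
      have c: "e * real n > 0" using e n by simp
      have "measure_pmf.expectation (M n) (\<lambda>s. \<bar>y s\<bar>) \<le> (z n / (e * real n) + e * real n) / 2"
        unfolding z_def by (rule exp_abs_le[OF M_finite[OF n(1)] c])
      also have "z n / (e * real n) \<le> (e^2 * (real n)^2) / (e * real n)"
        using elim(1) c by (intro divide_right_mono) auto
      also have "(e^2 * (real n)^2) / (e * real n) = e * real n"
        using c by (simp add: power2_eq_square)
      finally show ?case by simp
    qed
  qed
qed

end


lemma combine:
  fixes L y y' bb bb' cc cc' pk N N' D Er drift :: real
  assumes L: "L > 0" and yb: "\<bar>y\<bar> \<le> L * (1 + cc)" and bb: "bb \<ge> 0" "bb' \<ge> 0"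
    and y: "y = N - L * cc" and y': "y' = N' - L * cc'"
    and ccid: "cc * (1 + bb) = pk + bb' * cc'"
    and dr: "drift = pk + (bb' * N' - bb * N) / L + D - cc"
    and Db: "\<bar>D\<bar> \<le> Er / L"
  shows "y * drift \<le> bb' * (1 + cc) * \<bar>y'\<bar> + (1 + cc) * Er"
proof -
  have d2: "drift = (bb' * y' - bb * y) / L + D"
  proof -
    have "drift = pk + (bb' * N' - bb * N) / L + D - cc" by (rule dr)
    also have "pk = cc * (1 + bb) - bb' * cc'" using ccid by simp
    finally show ?thesis unfolding y y' using L by (simp add: field_simps)
  qed
  have e1: "y * drift = bb' * (y * y') / L - bb * (y * y) / L + y * D"
    unfolding d2 using L by (simp add: field_simps)
  have e2: "bb * (y * y) / L \<ge> 0" using bb L by simp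
  have e3: "bb' * (y * y') / L \<le> bb' * (\<bar>y\<bar> * \<bar>y'\<bar>) / L"
    using bb L by (intro divide_right_mono mult_left_mono) (auto simp: abs_mult[symmetric])
  have e4: "y * D \<le> \<bar>y\<bar> * \<bar>D\<bar>" by (simp add: abs_mult[symmetric])
  have e5: "\<bar>y\<bar> * \<bar>D\<bar> \<le> L * (1 + cc) * (Er / L)"
    using yb Db by (intro mult_mono) auto
  have e6: "bb' * (\<bar>y\<bar> * \<bar>y'\<bar>) / L \<le> bb' * (L * (1 + cc) * \<bar>y'\<bar>) / L"
    using yb bb L by (intro divide_right_mono mult_left_mono mult_right_mono) auto
  have e7: "L * (1 + cc) * (Er / L) = (1 + cc) * Er" "bb' * (L * (1 + cc) * \<bar>y'\<bar>) / L = bb' * (1 + cc) * \<bar>y'\<bar>"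
    using L by (simp_all add: field_simps)
  show ?thesis using e1 e2 e3 e4 e5 e6 e7 by linarith
qed

context cmpa
begin

definition yT :: "nat \<Rightarrow> cmpa_state \<Rightarrow> real" where "yT t s = Tc t s - real (length s) * p t"
definition yE :: "nat \<Rightarrow> cmpa_state \<Rightarrow> real" where "yE t s = Ec t s - real (length s) * pst t"
definition yN :: "nat \<Rightarrow> nat \<Rightarrow> cmpa_state \<Rightarrow> real" where "yN t k s = Nc t k s - real (length s) * cc t k"
definition errS :: "nat \<Rightarrow> nat \<Rightarrow> cmpa_state \<Rightarrow> real" where
  "errS i t s = Ssum (\<alpha> i t) s t - real (length s) * sig i t"

lemma K0: "0 < K" using K1 by simp

lemma drift_len:
  assumes I: "Inv K n s"
  shows "measure_pmf.expectation (step s) (\<lambda>s. real (length s)) = real (length s) + 1"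
proof -
  have "measure_pmf.expectation (step s) (\<lambda>s. real (length s)) = real (length s) + (\<Sum>i<K. p i * 1)
     + (\<Sum>i<K. p i * q i 0 * (\<Sum>v\<in>Vs 0 s. wt (\<alpha> i 0) s 0 v * 0))"
    by (rule step_exp_decomp[OF I K0]) simp
  then show ?thesis using psum by simp
qed

lemma yT_drift: "Inv K n s \<Longrightarrow> t < K \<Longrightarrow> measure_pmf.expectation (step s) (yT t) - yT t s = 0"
  unfolding yT_def
  by (simp add: fexp_diff step_finite drift_T drift_len algebra_simps)

lemma yE_drift: "Inv K n s \<Longrightarrow> t < K \<Longrightarrow> measure_pmf.expectation (step s) (yE t) - yE t s = 0"
  unfolding yE_def
  by (simp add: fexp_diff step_finite drift_E drift_len algebra_simps)

lemma yT_incr: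
  assumes I: "Inv K n s" and s': "s' \<in> set_pmf (step s)"
  shows "\<bar>yT t s' - yT t s\<bar> \<le> 1 + \<bar>p t\<bar>"
proof -
  obtain i v where iv: "i < K" "v < n" "s' = s @ [(i, Some v)]" using step_app[OF I s'] by blast
  have L: "length s = n" using I by (simp add: Inv_def)
  have "yT t s' - yT t s = (if i = t then 1 else 0) - p t"
    unfolding yT_def iv(3) Tc_app[OF I iv(2)] using L by (simp add: algebra_simps)
  then show ?thesis by auto
qed

lemma yE_incr:
  assumes I: "Inv K n s" and s': "s' \<in> set_pmf (step s)"
  shows "\<bar>yE t s' - yE t s\<bar> \<le> 1 + \<bar>pst t\<bar>"
proof -
  obtain i v where iv: "i < K" "v < n" "s' = s @ [(i, Some v)]" using step_app[OF I s'] by blast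
  have L: "length s = n" using I by (simp add: Inv_def)
  have "yE t s' - yE t s = (if vtype s v = t then 1 else 0) - pst t"
    unfolding yE_def iv(3) Ec_app[OF I iv(2)] using L by (simp add: algebra_simps)
  then show ?thesis by auto
qed

lemma small_zero: "small (\<lambda>n. measure_pmf.expectation (M n) (\<lambda>s. 0::real))"
  using small_const[of 0] by simp

lemma small_yT: "t < K \<Longrightarrow> small (\<lambda>n. measure_pmf.expectation (M n) (\<lambda>s. \<bar>yT t s\<bar>))"
  by (rule track[where g="\<lambda>n s. 0", OF yT_incr _ small_zero]) (simp_all add: yT_drift)

lemma small_yE: "t < K \<Longrightarrow> small (\<lambda>n. measure_pmf.expectation (M n) (\<lambda>s. \<bar>yE t s\<bar>))"
  by (rule track[where g="\<lambda>n s. 0", OF yE_incr _ small_zero]) (simp_all add: yE_drift)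

lemma errS_eq: "errS i t s = yE t s + \<alpha> i t * yT t s"
  unfolding errS_def yE_def yT_def Ssum_eq sig_def by (simp add: algebra_simps)

lemma small_errS:
  assumes "i < K" "t < K"
  shows "small (\<lambda>n. measure_pmf.expectation (M n) (\<lambda>s. \<bar>errS i t s\<bar>))"
proof (rule small_mono)
  show "small (\<lambda>n. measure_pmf.expectation (M n) (\<lambda>s. \<bar>yE t s\<bar>) + \<alpha> i t * measure_pmf.expectation (M n) (\<lambda>s. \<bar>yT t s\<bar>))"
  proof -
    have "\<alpha> i t > 0" using apos assms by auto
    then show ?thesis using assms by (intro small_add small_cmult small_yE small_yT) auto
  qed
  show "eventually (\<lambda>n. measure_pmf.expectation (M n) (\<lambda>s. \<bar>errS i t s\<bar>)
     \<le> measure_pmf.expectation (M n) (\<lambda>s. \<bar>yE t s\<bar>) + \<alpha> i t * measure_pmf.expectation (M n) (\<lambda>s. \<bar>yT t s\<bar>)) sequentially"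
    using eventually_ge_at_top[of K]
  proof eventually_elim
    case (elim n)
    have fin: "finite (set_pmf (M n))" by (rule M_finite[OF elim])
    have a: "\<alpha> i t > 0" using apos assms by auto
    have "measure_pmf.expectation (M n) (\<lambda>s. \<bar>errS i t s\<bar>)
       \<le> measure_pmf.expectation (M n) (\<lambda>s. \<bar>yE t s\<bar> + \<alpha> i t * \<bar>yT t s\<bar>)"
      by (rule exp_mono_fin[OF fin]) (use a in \<open>auto simp: errS_eq abs_mult intro: order.trans[OF abs_triangle_ineq]\<close>)
    also have "\<dots> = measure_pmf.expectation (M n) (\<lambda>s. \<bar>yE t s\<bar>) + \<alpha> i t * measure_pmf.expectation (M n) (\<lambda>s. \<bar>yT t s\<bar>)"
      by (simp only: fexp_add[OF fin] fexp_cmult)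
    finally show ?case .
  qed
qed

end


context cmpa
begin

lemma Nc_nn: "0 \<le> Nc t k s" unfolding Nc_def by (intro sum_nonneg) auto

lemma Nc_le: "Nc t k s \<le> real (length s)"
proof -
  have "Nc t k s \<le> (\<Sum>w<length s. (1::real))" unfolding Nc_def by (intro sum_mono) auto
  then show ?thesis by simp
qed

lemma Nc_weight: "(real d + a) * Nc t d s = (\<Sum>v\<in>Vs t s. (real (outdeg s v) + a) * (if outdeg s v = d then 1 else 0))"
  unfolding sum_Vs Nc_def sum_distrib_left by (intro sum.cong) auto

lemma weight_le: "a \<ge> 0 \<Longrightarrow> (real d + a) * Nc t d s \<le> Ssum a s t"
  unfolding Nc_weight Ssum_def by (intro sum_mono) auto

lemma weight_nn: "a \<ge> 0 \<Longrightarrow> 0 \<le> (real d + a) * Nc t d s"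
  using Nc_nn by simp

lemma Ssum_nn: "a \<ge> 0 \<Longrightarrow> 0 \<le> Ssum a s t"
  unfolding Ssum_def by (intro sum_nonneg) auto

lemma inN_bounds: "i < K \<Longrightarrow> t < K \<Longrightarrow> 0 \<le> inN i t k s \<and> inN i t k s \<le> Ssum (\<alpha> i t) s t"
proof -
  assume a: "i < K" "t < K"
  then have a0: "\<alpha> i t \<ge> 0" using apos by (simp add: less_imp_le)
  show ?thesis
  proof (cases "k = 0")
    case True
    then show ?thesis using Ssum_nn[OF a0] by (simp add: inN_def)
  next
    case False
    then have e: "inN i t k s = (real (k - 1) + \<alpha> i t) * Nc t (k - 1) s" by (simp add: inN_def)
    show ?thesis unfolding e using weight_le[OF a0, of "k-1" t s] weight_nn[OF a0, of "k-1" t s] by blast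
  qed
qed

lemma outN_bounds: "i < K \<Longrightarrow> t < K \<Longrightarrow> 0 \<le> outN i t k s \<and> outN i t k s \<le> Ssum (\<alpha> i t) s t"
proof -
  assume a: "i < K" "t < K"
  then have "\<alpha> i t \<ge> 0" using apos by (simp add: less_imp_le)
  then show ?thesis unfolding outN_def using weight_le weight_nn by auto
qed

lemma yN_abs: "t < K \<Longrightarrow> \<bar>yN t k s\<bar> \<le> real (length s) * (1 + cc t k)"
proof -
  assume t: "t < K"
  have "0 \<le> cc t k" by (rule cc_nn[OF t])
  moreover have "0 \<le> Nc t k s" "Nc t k s \<le> real (length s)" by (rule Nc_nn, rule Nc_le)
  ultimately show ?thesis unfolding yN_def
    by (auto simp: abs_le_iff algebra_simps intro: order.trans[of _ "real (length s)"] mult_nonneg_nonneg)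
qed

lemma cc_id: "t < K \<Longrightarrow> cc t k * (1 + bb t k) = (if k = 0 then p t else 0)
   + (if k = 0 then 0 else bb t (k - 1)) * (if k = 0 then 0 else cc t (k - 1))"
proof -
  assume t: "t < K"
  have "1 + bb t k > 0" using bb_nn[OF t, of k] by linarith
  then show ?thesis by (cases k) simp_all
qed

lemma sum_nu_in: "(\<Sum>i<K. nu i t * inN i t k s) = (if k = 0 then 0 else bb t (k - 1)) * (if k = 0 then 0 else Nc t (k - 1) s)"
  by (cases "k = 0") (simp_all add: inN_def bb_def sum_distrib_right mult.assoc)

lemma sum_nu_out: "(\<Sum>i<K. nu i t * outN i t k s) = bb t k * Nc t k s"
  by (simp add: outN_def bb_def sum_distrib_right mult.assoc)

lemma err_alg:
  fixes a g X S L :: real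
  assumes a: "0 \<le> a" "a \<le> g" and S: "0 < S" "\<bar>X\<bar> \<le> S" and L: "0 < L"
  shows "\<bar>a * (X / S) - a / g * X / L\<bar> \<le> \<bar>S - L * g\<bar> / L"
proof (cases "a = 0")
  case True
  then show ?thesis using L by simp
next
  case False
  then have g: "g > 0" using a by simp
  have "a * (X / S) - a / g * X / L = (a * X) * (L * g - S) / ((S * g) * L)"
    using g S L by (simp add: field_simps)
  also have "\<bar>\<dots>\<bar> = (a * \<bar>X\<bar>) * \<bar>L * g - S\<bar> / ((S * g) * L)"
    using g S L a by (simp add: abs_mult)
  also have "\<dots> \<le> (g * S) * \<bar>L * g - S\<bar> / ((S * g) * L)"
    using g S L a by (intro divide_right_mono mult_right_mono mult_mono) auto
  also have "\<dots> = \<bar>S - L * g\<bar> / L"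
    using g S L by (simp add: field_simps abs_minus_commute)
  finally show ?thesis .
qed

lemma yN_drift_eq:
  assumes I: "Inv K n s" and t: "t < K"
  shows "measure_pmf.expectation (step s) (yN t k) - yN t k s = (if k = 0 then p t else 0)
     + (\<Sum>i<K. p i * q i t * ((inN i t k s - outN i t k s) / Ssum (\<alpha> i t) s t)) - cc t k"
  unfolding yN_def
  by (simp add: fexp_diff step_finite[OF I] drift_N[OF I t] drift_len[OF I] algebra_simps)

lemma yN_drift_bound:
  assumes I: "Inv K n s" and t: "t < K" and n: "n \<ge> K"
  shows "yN t k s * (measure_pmf.expectation (step s) (yN t k) - yN t k s)
     \<le> (if k = 0 then 0 else bb t (k - 1)) * (1 + cc t k) * \<bar>if k = 0 then 0 else yN t (k - 1) s\<bar>
        + (1 + cc t k) * (\<Sum>i<K. \<bar>errS i t s\<bar>)"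
proof -
  have len: "length s = n" using I by (simp add: Inv_def)
  define L where "L = real n"
  have L: "L > 0" using n K1 by (simp add: L_def)
  define X where "X i = inN i t k s - outN i t k s" for i
  define S where "S i = Ssum (\<alpha> i t) s t" for i
  define D where "D = (\<Sum>i<K. p i * q i t * (X i / S i) - nu i t * X i / L)"
  have SX: "0 < S i" "\<bar>X i\<bar> \<le> S i" if i: "i < K" for i
    using Ssum_pos[OF I i t] inN_bounds[OF i t, of k s] outN_bounds[OF i t, of k s]
    by (auto simp: S_def X_def)
  have Db: "\<bar>D\<bar> \<le> (\<Sum>i<K. \<bar>errS i t s\<bar>) / L"
  proof -
    have "\<bar>D\<bar> \<le> (\<Sum>i<K. \<bar>p i * q i t * (X i / S i) - nu i t * X i / L\<bar>)"
      unfolding D_def by (rule sum_abs)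
    also have "\<dots> \<le> (\<Sum>i<K. \<bar>errS i t s\<bar> / L)"
    proof (intro sum_mono)
      fix i assume "i \<in> {..<K}"
      then have i: "i < K" by simp
      have "\<bar>p i * q i t * (X i / S i) - p i * q i t / sig i t * X i / L\<bar> \<le> \<bar>S i - L * sig i t\<bar> / L"
        by (rule err_alg[OF pq_nn[OF i t] pq_le_sig[OF i t] SX[OF i] L])
      then show "\<bar>p i * q i t * (X i / S i) - nu i t * X i / L\<bar> \<le> \<bar>errS i t s\<bar> / L"
        by (simp add: nu_def errS_def S_def L_def len)
    qed
    also have "\<dots> = (\<Sum>i<K. \<bar>errS i t s\<bar>) / L" by (simp add: sum_divide_distrib)
    finally show ?thesis .
  qed
  have sumX: "(\<Sum>i<K. nu i t * X i) = (if k = 0 then 0 else bb t (k - 1)) * (if k = 0 then 0 else Nc t (k - 1) s)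
      - bb t k * Nc t k s"
    unfolding X_def by (simp add: right_diff_distrib sum_subtractf sum_nu_in sum_nu_out)
  have dr: "measure_pmf.expectation (step s) (yN t k) - yN t k s = (if k = 0 then p t else 0)
     + ((if k = 0 then 0 else bb t (k - 1)) * (if k = 0 then 0 else Nc t (k - 1) s) - bb t k * Nc t k s) / L + D - cc t k"
  proof -
    have "(\<Sum>i<K. p i * q i t * (X i / S i)) = (\<Sum>i<K. nu i t * X i) / L + D"
      unfolding D_def by (simp add: sum_subtractf sum_divide_distrib)
    then show ?thesis unfolding yN_drift_eq[OF I t] sumX by (simp add: X_def S_def)
  qed
  have yb: "\<bar>yN t k s\<bar> \<le> L * (1 + cc t k)" using yN_abs[OF t, of k s] by (simp add: L_def len)
  have yy: "yN t k s = Nc t k s - L * cc t k" by (simp add: yN_def L_def len)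
  have yy': "(if k = 0 then 0 else yN t (k - 1) s) = (if k = 0 then 0 else Nc t (k - 1) s) - L * (if k = 0 then 0 else cc t (k - 1))"
    by (simp add: yN_def L_def len)
  have bbn: "bb t k \<ge> 0" "(if k = 0 then 0 else bb t (k - 1)) \<ge> 0" using bb_nn[OF t] by auto
  show ?thesis
    by (rule combine[OF L yb bbn yy yy' cc_id[OF t] dr Db])
qed

lemma yN_incr:
  assumes I: "Inv K n s" and s': "s' \<in> set_pmf (step s)"
  shows "\<bar>yN t k s' - yN t k s\<bar> \<le> 2 + \<bar>cc t k\<bar>"
proof -
  obtain i v where iv: "i < K" "v < n" "s' = s @ [(i, Some v)]" using step_app[OF I s'] by blast
  have L: "length s = n" using I by (simp add: Inv_def)
  define dN :: real where "dN = (if i = t \<and> k = 0 then 1 else 0)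
   + (if vtype s v = t then (if Suc (outdeg s v) = k then 1 else 0) - (if outdeg s v = k then 1 else 0) else 0)"
  have e: "yN t k s' - yN t k s = dN - cc t k"
    unfolding yN_def iv(3) Nc_app[OF I iv(2)] dN_def using L by (simp add: algebra_simps del: cc.simps)
  have "\<bar>dN\<bar> \<le> 2" unfolding dN_def by (auto split: if_splits)
  moreover have "\<bar>dN - cc t k\<bar> \<le> \<bar>dN\<bar> + \<bar>cc t k\<bar>" by (rule abs_triangle_ineq4)
  ultimately show ?thesis unfolding e by linarith
qed

lemma small_yN_step:
  assumes t: "t < K"
    and IH: "small (\<lambda>n. measure_pmf.expectation (M n) (\<lambda>s. \<bar>if k = 0 then 0 else yN t (k - 1) s\<bar>))"
  shows "small (\<lambda>n. measure_pmf.expectation (M n) (\<lambda>s. \<bar>yN t k s\<bar>))"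
proof (rule track[where g="\<lambda>n s. (if k = 0 then 0 else bb t (k - 1)) * (1 + cc t k) * \<bar>if k = 0 then 0 else yN t (k - 1) s\<bar>
        + (1 + cc t k) * (\<Sum>i<K. \<bar>errS i t s\<bar>)"])
  show "\<bar>yN t k s' - yN t k s\<bar> \<le> 2 + \<bar>cc t k\<bar>" if "Inv K n s" "s' \<in> set_pmf (step s)" for n s s'
    by (rule yN_incr[OF that])
  show "yN t k s * (measure_pmf.expectation (step s) (yN t k) - yN t k s) \<le>
      (if k = 0 then 0 else bb t (k - 1)) * (1 + cc t k) * \<bar>if k = 0 then 0 else yN t (k - 1) s\<bar>
        + (1 + cc t k) * (\<Sum>i<K. \<bar>errS i t s\<bar>)" if "K \<le> n" "Inv K n s" for n s
    by (rule yN_drift_bound[OF that(2) t that(1)])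
  have c1: "(if k = 0 then 0 else bb t (k - 1)) * (1 + cc t k) \<ge> 0" "1 + cc t k \<ge> 0"
    using bb_nn[OF t] cc_nn[OF t] by auto
  show "small (\<lambda>n. measure_pmf.expectation (M n) (\<lambda>s. (if k = 0 then 0 else bb t (k - 1)) * (1 + cc t k) * \<bar>if k = 0 then 0 else yN t (k - 1) s\<bar>
        + (1 + cc t k) * (\<Sum>i<K. \<bar>errS i t s\<bar>)))"
  proof (rule small_mono)
    show "small (\<lambda>n. (if k = 0 then 0 else bb t (k - 1)) * (1 + cc t k) * measure_pmf.expectation (M n) (\<lambda>s. \<bar>if k = 0 then 0 else yN t (k - 1) s\<bar>)
        + (1 + cc t k) * (\<Sum>i<K. measure_pmf.expectation (M n) (\<lambda>s. \<bar>errS i t s\<bar>)))"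
      by (intro small_add small_cmult IH c1 small_sum small_errS t) auto
    show "eventually (\<lambda>n. measure_pmf.expectation (M n) (\<lambda>s. (if k = 0 then 0 else bb t (k - 1)) * (1 + cc t k) * \<bar>if k = 0 then 0 else yN t (k - 1) s\<bar>
        + (1 + cc t k) * (\<Sum>i<K. \<bar>errS i t s\<bar>)) \<le> (if k = 0 then 0 else bb t (k - 1)) * (1 + cc t k) * measure_pmf.expectation (M n) (\<lambda>s. \<bar>if k = 0 then 0 else yN t (k - 1) s\<bar>)
        + (1 + cc t k) * (\<Sum>i<K. measure_pmf.expectation (M n) (\<lambda>s. \<bar>errS i t s\<bar>))) sequentially"
      using eventually_ge_at_top[of K]
    proof eventually_elim
      case (elim n)
      have fin: "finite (set_pmf (M n))" by (rule M_finite[OF elim])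
      show ?case by (simp only: fexp_add[OF fin] fexp_cmult fexp_sum[OF fin finite_lessThan] order.refl)
    qed
  qed
qed

lemma small_yN: "t < K \<Longrightarrow> small (\<lambda>n. measure_pmf.expectation (M n) (\<lambda>s. \<bar>yN t k s\<bar>))"
proof (induction k)
  case 0
  then show ?case using small_yN_step[of t 0] small_zero by simp
next
  case (Suc k)
  then show ?case using small_yN_step[of t "Suc k"] by simp
qed

end


lemma Gamma_step: "x > 0 \<Longrightarrow> Gamma (x + 1) = x * Gamma (x::real)"
  by (rule Gamma_plus1) (auto dest: nonpos_Ints_nonpos)

lemma alg0:
  fixes \<nu> a p Ga G1 :: real
  assumes "\<nu> > 0" "a > 0" "Ga > 0" "G1 > 0"
  shows "p / (1 + \<nu> * a) = p / \<nu> * (Ga * G1) / (Ga * ((1 / \<nu> + a) * G1))"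
proof -
  have h: "1 / \<nu> + a > 0" using assms by (simp add: add_pos_pos)
  have G: "Ga * G1 > 0" using assms by simp
  have "p / \<nu> * (Ga * G1) / (Ga * ((1 / \<nu> + a) * G1)) = (p / \<nu>) * ((Ga * G1) / ((Ga * G1) * (1 / \<nu> + a)))"
    by (simp add: ac_simps)
  also have "(Ga * G1) / ((Ga * G1) * (1 / \<nu> + a)) = 1 / (1 / \<nu> + a)" using G h assms by simp
  also have "p / \<nu> * (1 / (1 / \<nu> + a)) = p / (1 + \<nu> * a)" using assms h by (simp add: field_simps)
  finally show ?thesis by simp
qed

lemma algS:
  fixes \<nu> a p Ga G1 Gk Gk2 x :: real
  assumes "\<nu> > 0" "a > 0" "Ga > 0" "G1 > 0" "Gk > 0" "Gk2 > 0" "x \<ge> 0"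
  shows "\<nu> * (x + a) * (p / \<nu> * (Gk * G1) / (Ga * Gk2)) / (1 + \<nu> * (x + 1 + a))
    = p / \<nu> * ((x + a) * Gk * G1) / (Ga * ((x + 1 + 1 / \<nu> + a) * Gk2))"
proof -
  have "1 + \<nu> * (x + 1 + a) > 0" "x + 1 + 1 / \<nu> + a > 0" using assms by (simp_all add: add_pos_pos add_nonneg_pos)
  then show ?thesis using assms by (simp add: field_simps)
qed

lemma closed_form:
  fixes \<nu> a p :: real and c :: "nat \<Rightarrow> real"
  assumes nu: "\<nu> > 0" and a: "a > 0"
    and c0: "c 0 = p / (1 + \<nu> * a)"
    and cS: "\<And>k. c (Suc k) = \<nu> * (real k + a) * c k / (1 + \<nu> * (real (Suc k) + a))"
  shows "c k = p / \<nu> * (Gamma (real k + a) * Gamma (1 / \<nu> + a)) / (Gamma a * Gamma (real k + 1 + 1 / \<nu> + a))"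
proof (induction k)
  case 0
  have x: "1 / \<nu> + a > 0" using nu a by (simp add: add_pos_pos)
  have g: "Gamma (1 + 1 / \<nu> + a) = (1 / \<nu> + a) * Gamma (1 / \<nu> + a)"
    using Gamma_step[OF x] by (simp add: add_ac)
  have pos: "Gamma a > 0" "Gamma (1 / \<nu> + a) > 0" using x a by auto
  have g': "Gamma (real 0 + 1 + 1 / \<nu> + a) = (1 / \<nu> + a) * Gamma (1 / \<nu> + a)" "Gamma (real 0 + a) = Gamma a"
    using g by simp_all
  show ?case unfolding c0 g' by (rule alg0[OF nu a pos])
next
  case (Suc k)
  have x1: "real k + a > 0" using a by simp
  have x2: "real k + 1 + 1 / \<nu> + a > 0" using a nu by (simp add: add_pos_pos)
  have g1: "Gamma (real (Suc k) + a) = (real k + a) * Gamma (real k + a)"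
    using Gamma_step[OF x1] by (simp add: add_ac)
  have g2: "Gamma (real (Suc k) + 1 + 1 / \<nu> + a) = (real k + 1 + 1 / \<nu> + a) * Gamma (real k + 1 + 1 / \<nu> + a)"
    using Gamma_step[OF x2] by (simp add: add_ac)
  have pos: "Gamma a > 0" "Gamma (1 / \<nu> + a) > 0" "Gamma (real k + a) > 0" "Gamma (real k + 1 + 1 / \<nu> + a) > 0"
    using x1 x2 a nu by (auto simp: add_pos_pos)
  have d: "1 + \<nu> * (real (Suc k) + a) > 0" using nu a by (simp add: add_pos_pos)
  have e: "real (Suc k) + a = real k + 1 + a" by simp
  show ?case unfolding cS Suc g1 g2 unfolding e
    by (rule algS[OF nu a pos]) simp
qed

context cmpa
begin

lemma nu1_eq: "nu1 K p q \<alpha> t = (\<Sum>i<K. nu i t)"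
  unfolding nu1_def nu2_def nu_def sig_def pst_def p_star_def ..

lemma alpha1_eq: "alpha1 K p q \<alpha> t = (\<Sum>i<K. nu i t * \<alpha> i t) / (\<Sum>i<K. nu i t)"
  unfolding alpha1_def nu1_eq unfolding nu2_def nu_def sig_def pst_def p_star_def ..

lemma pst_eq: "p_star K p q t = pst t"
  unfolding p_star_def pst_def ..

lemma cc_term:
  assumes t: "t < K"
  shows "cc t k = (if p_star K p q t = 0 then (if k = 0 then p t else 0)
     else (let n = nu1 K p q \<alpha> t; a = alpha1 K p q \<alpha> t in
       p t / n * (Gamma (real k + a) * Gamma (1 / n + a))
         / (Gamma a * Gamma (real k + 1 + 1 / n + a))))"
proof (cases "pst t = 0")
  case True
  then have "\<forall>i\<in>{..<K}. p i * q i t = 0"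
    using sum_nonneg_eq_0_iff[of "{..<K}" "\<lambda>i. p i * q i t"] pq_nn[OF _ t] unfolding pst_def by auto
  then have "\<And>i. i < K \<Longrightarrow> nu i t = 0" by (simp add: nu_def)
  then have bb0: "\<And>k. bb t k = 0" unfolding bb_def by simp
  show ?thesis using True by (cases k) (simp_all add: pst_eq bb0)
next
  case False
  then have pos: "pst t > 0" using pst_nn[OF t] by simp
  have "\<exists>j<K. p j * q j t > 0"
  proof (rule ccontr)
    assume "\<not> (\<exists>j<K. p j * q j t > 0)"
    then have "\<forall>i<K. p i * q i t \<le> 0" by (meson not_le)
    then have "pst t \<le> 0" unfolding pst_def by (intro sum_nonpos) auto
    then show False using pos by simp
  qed
  then obtain j where j: "j < K" "p j * q j t > 0" by blast
  have nuj: "nu j t > 0" using j pq_le_sig[OF j(1) t] by (simp add: nu_def)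
  define \<nu> where "\<nu> = (\<Sum>i<K. nu i t)"
  define A where "A = (\<Sum>i<K. nu i t * \<alpha> i t)"
  have nn: "\<And>i. i \<in> {..<K} \<Longrightarrow> 0 \<le> nu i t" using nu_nn t by auto
  have nupos: "\<nu> > 0"
  proof -
    have "nu j t \<le> \<nu>" unfolding \<nu>_def using j nn by (intro member_le_sum) auto
    then show ?thesis using nuj by simp
  qed
  have Apos: "A > 0"
  proof -
    have nn2: "\<And>i. i \<in> {..<K} \<Longrightarrow> 0 \<le> nu i t * \<alpha> i t"
    proof -
      fix i assume i: "i \<in> {..<K}"
      then have "0 \<le> nu i t" "0 < \<alpha> i t" using nn apos t by auto
      then show "0 \<le> nu i t * \<alpha> i t" by simp
    qed
    have "nu j t * \<alpha> j t \<le> A" unfolding A_def using j nn2 by (intro member_le_sum) auto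
    moreover have "nu j t * \<alpha> j t > 0" using nuj apos j t by simp
    ultimately show ?thesis by simp
  qed
  define a where "a = A / \<nu>"
  have apos': "a > 0" using Apos nupos by (simp add: a_def)
  have bbe: "bb t k = \<nu> * (real k + a)" for k
  proof -
    have "bb t k = (\<Sum>i<K. real k * nu i t + nu i t * \<alpha> i t)"
      unfolding bb_def by (intro sum.cong) (auto simp: algebra_simps)
    also have "\<dots> = real k * \<nu> + A" unfolding \<nu>_def A_def by (simp add: sum.distrib sum_distrib_left)
    finally have "bb t k = real k * \<nu> + A" .
    then show ?thesis using nupos by (simp add: a_def distrib_left)
  qed
  have cf: "cc t k = p t / \<nu> * (Gamma (real k + a) * Gamma (1 / \<nu> + a)) / (Gamma a * Gamma (real k + 1 + 1 / \<nu> + a))"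
    by (rule closed_form[OF nupos apos']) (simp_all add: bbe)
  have ps: "\<not> p_star K p q t = 0" using False by (simp add: pst_eq)
  have e1: "nu1 K p q \<alpha> t = \<nu>" by (simp add: nu1_eq \<nu>_def)
  have e2: "alpha1 K p q \<alpha> t = a" by (simp add: alpha1_eq a_def A_def \<nu>_def)
  show ?thesis unfolding Let_def e1 e2 if_not_P[OF ps] by (rule cf)
qed

lemma c_star_eq: "c_star K p q \<alpha> k = (\<Sum>t<K. cc t k)"
  unfolding c_star_def
proof (intro sum.cong refl)
  fix t assume "t \<in> {..<K}"
  then have "t < K" by simp
  then show "(if p_star K p q t = 0 then (if k = 0 then p t else 0)
     else (let n = nu1 K p q \<alpha> t; a = alpha1 K p q \<alpha> t in
       p t / n * (Gamma (real k + a) * Gamma (1 / n + a))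
         / (Gamma a * Gamma (real k + 1 + 1 / n + a)))) = cc t k"
    by (rule cc_term[symmetric])
qed

lemma deg_count_eq:
  assumes I: "Inv K n s"
  shows "real (deg_count k s) = (\<Sum>t<K. Nc t k s)"
proof -
  have ty: "\<And>w. w < length s \<Longrightarrow> vtype s w < K" using I by (auto simp: Inv_def vtype_def)
  have set: "{v. v < length s \<and> outdeg s v = k} = {v \<in> {..<length s}. outdeg s v = k}" by auto
  have "real (deg_count k s) = (\<Sum>v\<in>{v \<in> {..<length s}. outdeg s v = k}. (1::real))"
    unfolding deg_count_def set by simp
  also have "\<dots> = (\<Sum>w<length s. if outdeg s w = k then 1 else 0)"
    by (rule sum.inter_filter) simp
  also have "\<dots> = (\<Sum>w<length s. \<Sum>t<K. if vtype s w = t \<and> outdeg s w = k then 1 else 0)"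
  proof (intro sum.cong refl)
    fix w assume "w \<in> {..<length s}"
    then have w: "vtype s w < K" using ty by simp
    show "(if outdeg s w = k then 1 else 0) = (\<Sum>t<K. if vtype s w = t \<and> outdeg s w = k then 1 else (0::real))"
    proof (cases "outdeg s w = k")
      case True
      have "(\<Sum>t<K. if vtype s w = t \<and> outdeg s w = k then 1 else (0::real)) = (\<Sum>t<K. if vtype s w = t then 1 else 0)"
        using True by (intro sum.cong) auto
      also have "\<dots> = 1" using w by (simp add: sum.delta)
      finally show ?thesis using True by simp
    next
      case False
      then show ?thesis by simp
    qed
  qed
  also have "\<dots> = (\<Sum>t<K. Nc t k s)" unfolding Nc_def by (rule sum.swap)
  finally show ?thesis .
qed

end


context cmpa
begin

lemma main:
  "\<forall>\<epsilon>>0. (\<lambda>n. measure_pmf.prob (cmpa_tree K p q \<alpha> n)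
            {s. \<bar>real (deg_count k s) / real n - c_star K p q \<alpha> k\<bar> > \<epsilon>}) \<longlonglongrightarrow> 0"
proof (intro allI impI)
  fix \<epsilon> :: real assume eps: "\<epsilon> > 0"
  define A where "A n = {s. \<bar>real (deg_count k s) / real n - c_star K p q \<alpha> k\<bar> > \<epsilon>}" for n
  define Y where "Y s = (\<Sum>t<K. \<bar>yN t k s\<bar>)" for s
  have sm: "small (\<lambda>n. measure_pmf.expectation (M n) Y)"
  proof (rule small_mono)
    show "small (\<lambda>n. \<Sum>t<K. measure_pmf.expectation (M n) (\<lambda>s. \<bar>yN t k s\<bar>))"
      by (intro small_sum small_yN) auto
    show "eventually (\<lambda>n. measure_pmf.expectation (M n) Y \<le> (\<Sum>t<K. measure_pmf.expectation (M n) (\<lambda>s. \<bar>yN t k s\<bar>))) sequentially"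
      using eventually_ge_at_top[of K]
    proof eventually_elim
      case (elim n)
      show ?case unfolding Y_def by (simp only: fexp_sum[OF M_finite[OF elim] finite_lessThan] order.refl)
    qed
  qed
  have bound: "measure_pmf.prob (M n) (A n) \<le> measure_pmf.expectation (M n) Y / (\<epsilon> * real n)"
    if n: "n \<ge> K" for n
  proof -
    have fin: "finite (set_pmf (M n))" by (rule M_finite[OF n])
    have npos: "real n > 0" using n K1 by simp
    have "measure_pmf.prob (M n) (A n) = measure_pmf.expectation (M n) (indicator (A n) :: _ \<Rightarrow> real)"
      by simp
    also have "\<dots> \<le> measure_pmf.expectation (M n) (\<lambda>s. Y s / (\<epsilon> * real n))"
    proof (rule exp_mono_fin[OF fin])
      fix s assume "s \<in> set_pmf (M n)"
      then have I: "Inv K n s" by (rule M_Inv[OF n])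
      have len: "length s = n" using I by (simp add: Inv_def)
      have Y0: "Y s \<ge> 0" unfolding Y_def by (intro sum_nonneg) auto
      show "indicator (A n) s \<le> Y s / (\<epsilon> * real n)"
      proof (cases "s \<in> A n")
        case True
        have "real (deg_count k s) - real n * c_star K p q \<alpha> k = (\<Sum>t<K. yN t k s)"
          unfolding deg_count_eq[OF I] c_star_eq yN_def len by (simp add: sum_subtractf sum_distrib_left)
        then have "\<bar>real (deg_count k s) - real n * c_star K p q \<alpha> k\<bar> \<le> Y s"
          unfolding Y_def by (simp add: sum_abs)
        moreover have "real (deg_count k s) / real n - c_star K p q \<alpha> k = (real (deg_count k s) - real n * c_star K p q \<alpha> k) / real n"
          using npos by (simp add: field_simps)
        ultimately have "\<bar>real (deg_count k s) / real n - c_star K p q \<alpha> k\<bar> \<le> Y s / real n"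
          using npos by (simp add: divide_right_mono)
        then have "\<epsilon> < Y s / real n" using True by (simp add: A_def)
        then have "\<epsilon> * real n < Y s" using npos by (simp add: field_simps)
        then have "1 < Y s / (\<epsilon> * real n)" using npos eps by (simp add: field_simps)
        then show ?thesis using True by simp
      next
        case False
        then show ?thesis using Y0 eps npos by simp
      qed
    qed
    also have "\<dots> = measure_pmf.expectation (M n) Y / (\<epsilon> * real n)"
      by (rule integral_divide_zero)
    finally show ?thesis .
  qed
  show "(\<lambda>n. measure_pmf.prob (M n) {s. \<bar>real (deg_count k s) / real n - c_star K p q \<alpha> k\<bar> > \<epsilon>}) \<longlonglongrightarrow> 0"
    unfolding A_def[symmetric]
  proof (rule order_tendstoI)
    fix a :: real assume "a < 0"
    then show "eventually (\<lambda>n. a < measure_pmf.prob (M n) (A n)) sequentially"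
      by (intro always_eventually allI) (auto intro: less_le_trans)
  next
    fix a :: real assume a: "0 < a"
    have "eventually (\<lambda>n. measure_pmf.expectation (M n) Y \<le> (a * \<epsilon> / 2) * real n) sequentially"
    proof -
      have "a * \<epsilon> / 2 > 0" using a eps by simp
      then show ?thesis using sm unfolding small_def by blast
    qed
    then show "eventually (\<lambda>n. measure_pmf.prob (M n) (A n) < a) sequentially"
      using eventually_ge_at_top[of "max K 1"]
    proof eventually_elim
      case (elim n)
      then have n: "n \<ge> K" "n \<ge> 1" by auto
      have c: "\<epsilon> * real n > 0" using eps n by simp
      have "measure_pmf.prob (M n) (A n) \<le> measure_pmf.expectation (M n) Y / (\<epsilon> * real n)" by (rule bound[OF n(1)])
      also have "\<dots> \<le> (a * \<epsilon> / 2) * real n / (\<epsilon> * real n)"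
        using elim(1) c by (intro divide_right_mono) auto
      also have "\<dots> = a / 2" using eps n by (simp add: field_simps)
      also have "\<dots> < a" using a by simp
      finally show ?case .
    qed
  qed
qed

end

theorem theorem3p9:
  fixes K :: nat and p :: "nat \<Rightarrow> real" and q \<alpha> :: "nat \<Rightarrow> nat \<Rightarrow> real" and k :: nat
  assumes "K \<ge> 2"
    and "\<forall>i<K. p i \<ge> 0" and "(\<Sum>i<K. p i) = 1"
    and "p 0 > 0" and "\<forall>i<K. p i \<le> p 0"
    and "\<forall>i<K. \<forall>j<K. q i j \<ge> 0" and "\<forall>i<K. (\<Sum>j<K. q i j) = 1"
    and "\<forall>i<K. \<forall>j<K. \<alpha> i j > 0"
  shows "\<forall>\<epsilon>>0. (\<lambda>n. measure_pmf.prob (cmpa_tree K p q \<alpha> n)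
            {s. \<bar>real (deg_count k s) / real n - c_star K p q \<alpha> k\<bar> > \<epsilon>})
          \<longlonglongrightarrow> 0"
proof -
  interpret cmpa K p q \<alpha>
    using assms by unfold_locales auto
  show ?thesis by (rule main)
qed


end
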